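(* The problem "given a CFSM protocol $\mathbf P$, an edge $\beta$, a message $b\in M_\beta$ and a state $p\in K_i$ with $i=+\beta$, can $b$ arrive at $p$?" is algorithmically decidable for CFSM protocols with the recognizable channel property.
   Context: A CFSM protocol $\mathbf P$ has a finite directed communication graph $G=(N,E)$ (edge $\xi$ has tail $-\xi$, head $+\xi$), pairwise disjoint finite message sets $M_\xi$, and for each $j\in N$ a finite state machine $F_j=(K_j,\Sigma_j,T_j,h_j)$: finite state set $K_j$, initial state $h_j$, alphabet $\Sigma_j=\{+b: b\in M_\xi,\ j=+\xi\}\cup\{-b: b\in M_\xi,\ j=-\xi\}$, transitions $T_j\subseteq K_j\times\Sigma_j\times K_j$ ($+b$ = receive, $-b$ = send). A composite state is $S=(p_j:j\in N)$; a channel content is $C=(x_\xi:\xi\in E)$, $x_\xi\in M_\xi^*$; global states are pairs $(S,C)$; $C^0$ has all components empty; the initial global state is $((h_j:j\in N),C^0)$. A step: some machine $F_i$ takes $p_i\xrightarrow{-b}q_i$ with $b\in M_\beta$, $i=-\beta$, appending $b$ to the end of $x_\beta$; or takes $p_i\xrightarrow{+b}q_i$ with $b\in M_\beta$, $i=+\beta$, provided $x_\beta$ begins with $b$, removing it; all else unchanged. Reachable means reachable from the initial global state by finitely many steps. The message $b\in M_\beta$ can arrive at $p\in K_i$ (where $i=+\beta$) if there is a reachable global state $((p_j:j\in N),(x_\xi:\xi\in E))$ with $p_i=p$ and $x_\beta$ beginning with $b$. $\mathbf P$ has the recognizable channel property if for every composite state $S$ the set $\{C:(S,C)\text{ reachable}\}$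 is a finite union of sets $\prod_{\xi\in E}L_\xi$ with each $L_\xi\subseteq M_\xi^*$ regular. *)

theory Defs
  imports Main "HOL-Library.Nat_Bijection"
begin

datatype recf =
    RZero
  | RSucc
  | RProj nat
  | RComp recf "recf list"
  | RPrec recf recf
  | RMin recf

inductive eval_recf :: "recf \<Rightarrow> nat list \<Rightarrow> nat \<Rightarrow> bool" where
  zero: "eval_recf RZero xs 0"
| succ: "eval_recf RSucc (x # xs) (Suc x)"
| proj: "i < length xs \<Longrightarrow> eval_recf (RProj i) xs (xs ! i)"
| comp: "length zs = length gs \<Longrightarrow> (\<forall>k<length gs. eval_recf (gs ! k) xs (zs ! k))
          \<Longrightarrow> eval_recf f zs y \<Longrightarrow> eval_recf (RComp f gs) xs y"
| prec0: "eval_recf f xs y \<Longrightarrow> eval_recf (RPrec f g) (0 # xs) y"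
| precS: "eval_recf (RPrec f g) (n # xs) r \<Longrightarrow> eval_recf g (n # r # xs) y
          \<Longrightarrow> eval_recf (RPrec f g) (Suc n # xs) y"
| mini: "eval_recf f (n # xs) 0 \<Longrightarrow> (\<forall>m<n. \<exists>k. eval_recf f (m # xs) (Suc k))
          \<Longrightarrow> eval_recf (RMin f) xs n"

definition decidable_on :: "(nat \<Rightarrow> bool) \<Rightarrow> (nat \<Rightarrow> bool) \<Rightarrow> bool" where
  "decidable_on Promise Q \<longleftrightarrow>
     (\<exists>f. \<forall>n. Promise n \<longrightarrow> eval_recf f [n] (if Q n then 1 else 0))"

datatype rexp = ZeroR | OneR | AtomR nat | PlusR rexp rexp | TimesR rexp rexp | StarR rexp

inductive_set star_lang :: "nat list set \<Rightarrow> nat list set" for L where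
  star_nil: "[] \<in> star_lang L"
| star_app: "u \<in> L \<Longrightarrow> v \<in> star_lang L \<Longrightarrow> u @ v \<in> star_lang L"

fun lang :: "rexp \<Rightarrow> nat list set" where
  "lang ZeroR = {}"
| "lang OneR = {[]}"
| "lang (AtomR a) = {[a]}"
| "lang (PlusR r s) = lang r \<union> lang s"
| "lang (TimesR r s) = {u @ v | u v. u \<in> lang r \<and> v \<in> lang s}"
| "lang (StarR r) = star_lang (lang r)"

definition regular :: "nat list set \<Rightarrow> bool" where
  "regular L \<longleftrightarrow> (\<exists>r. lang r = L)"

text \<open>An edge is (tail, head, message set M_xi as a list).  Edges are numbered 0..<|E|
  by their position in the edge list; nodes are 0..<|N| (position in the machine list).
  A transition (p, s, b, q) is p --(-b)--> q (send) if s = True and p --(+b)--> q (receive)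
  if s = False.  A machine is (state set K_j as a list, initial state h_j, transitions T_j).\<close>

type_synonym edge = "nat \<times> nat \<times> nat list"
type_synonym trans = "nat \<times> bool \<times> nat \<times> nat"
type_synonym machine = "nat list \<times> nat \<times> trans list"
type_synonym protocol = "edge list \<times> machine list"
type_synonym gstate = "nat list \<times> nat list list"

definition edges :: "protocol \<Rightarrow> edge list" where "edges P = fst P"
definition machines :: "protocol \<Rightarrow> machine list" where "machines P = snd P"
definition tl_e :: "protocol \<Rightarrow> nat \<Rightarrow> nat" where "tl_e P \<xi> = fst (edges P ! \<xi>)"
definition hd_e :: "protocol \<Rightarrow> nat \<Rightarrow> nat" where "hd_e P \<xi> = fst (snd (edges P ! \<xi>))"
definition msgs :: "protocol \<Rightarrow> nat \<Rightarrow> nat set" where "msgs P \<xi> = set (snd (snd (edges P ! \<xi>)))"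
definition states :: "protocol \<Rightarrow> nat \<Rightarrow> nat set" where "states P j = set (fst (machines P ! j))"
definition init :: "protocol \<Rightarrow> nat \<Rightarrow> nat" where "init P j = fst (snd (machines P ! j))"
definition trans :: "protocol \<Rightarrow> nat \<Rightarrow> trans set" where "trans P j = set (snd (snd (machines P ! j)))"

definition wf_protocol :: "protocol \<Rightarrow> bool" where
  "wf_protocol P \<longleftrightarrow>
     (\<forall>\<xi><length (edges P). tl_e P \<xi> < length (machines P) \<and> hd_e P \<xi> < length (machines P)) \<and>
     (\<forall>\<xi>1<length (edges P). \<forall>\<xi>2<length (edges P). \<xi>1 \<noteq> \<xi>2 \<longrightarrow> msgs P \<xi>1 \<inter> msgs P \<xi>2 = {}) \<and>
     (\<forall>j<length (machines P). init P j \<in> states P j \<and>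
        (\<forall>p s b q. (p, s, b, q) \<in> trans P j \<longrightarrow>
           p \<in> states P j \<and> q \<in> states P j \<and>
           (\<exists>\<xi><length (edges P). b \<in> msgs P \<xi> \<and> (if s then tl_e P \<xi> = j else hd_e P \<xi> = j))))"

text \<open>Global states (S, C): S = composite state (one local state per node),
  C = channel contents (one word per edge).\<close>
inductive step :: "protocol \<Rightarrow> gstate \<Rightarrow> gstate \<Rightarrow> bool" for P where
  send: "i < length (machines P) \<Longrightarrow> \<beta> < length (edges P) \<Longrightarrow> b \<in> msgs P \<beta> \<Longrightarrow>
         tl_e P \<beta> = i \<Longrightarrow> (S ! i, True, b, q) \<in> trans P i \<Longrightarrow>
         step P (S, C) (S[i := q], C[\<beta> := C ! \<beta> @ [b]])"
| recv: "i < length (machines P) \<Longrightarrow> \<beta> < length (edges P) \<Longrightarrow> b \<in> msgs P \<beta> \<Longrightarrow>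
         hd_e P \<beta> = i \<Longrightarrow> (S ! i, False, b, q) \<in> trans P i \<Longrightarrow> C ! \<beta> = b # w \<Longrightarrow>
         step P (S, C) (S[i := q], C[\<beta> := w])"

definition initial_gstate :: "protocol \<Rightarrow> gstate" where
  "initial_gstate P = (map (\<lambda>j. init P j) [0..<length (machines P)], replicate (length (edges P)) [])"

definition reachable :: "protocol \<Rightarrow> gstate \<Rightarrow> bool" where
  "reachable P G \<longleftrightarrow> (step P)\<^sup>*\<^sup>* (initial_gstate P) G"

definition can_arrive :: "protocol \<Rightarrow> nat \<Rightarrow> nat \<Rightarrow> nat \<Rightarrow> bool" where
  "can_arrive P \<beta> b p \<longleftrightarrow>
     (\<exists>S C w. reachable P (S, C) \<and> S ! hd_e P \<beta> = p \<and> C ! \<beta> = b # w)"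

definition recognizable_channel_property :: "protocol \<Rightarrow> bool" where
  "recognizable_channel_property P \<longleftrightarrow>
     (\<forall>S. \<exists>F :: nat list set list list.
        (\<forall>Ls \<in> set F. length Ls = length (edges P) \<and>
           (\<forall>\<xi><length (edges P). regular (Ls ! \<xi>) \<and> Ls ! \<xi> \<subseteq> lists (msgs P \<xi>))) \<and>
        {C. reachable P (S, C)} =
          (\<Union>Ls \<in> set F. {C. length C = length (edges P) \<and> (\<forall>\<xi><length (edges P). C ! \<xi> \<in> Ls ! \<xi>)}))"

definition enc_edge :: "edge \<Rightarrow> nat" where
  "enc_edge e = (case e of (t, h, ms) \<Rightarrow> list_encode [t, h, list_encode ms])"
definition enc_trans :: "trans \<Rightarrow> nat" where
  "enc_trans tr = (case tr of (p, s, b, q) \<Rightarrow> list_encode [p, if s then 1 else 0, b, q])"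
definition enc_machine :: "machine \<Rightarrow> nat" where
  "enc_machine m = (case m of (ks, h, ts) \<Rightarrow>
      list_encode [list_encode ks, h, list_encode (map enc_trans ts)])"
definition enc_protocol :: "protocol \<Rightarrow> nat" where
  "enc_protocol P = list_encode [list_encode (map enc_edge (edges P)),
                                 list_encode (map enc_machine (machines P))]"
definition enc_instance :: "protocol \<Rightarrow> nat \<Rightarrow> nat \<Rightarrow> nat \<Rightarrow> nat" where
  "enc_instance P \<beta> b p = list_encode [enc_protocol P, \<beta>, b, p]"

definition valid_instance :: "protocol \<Rightarrow> nat \<Rightarrow> nat \<Rightarrow> nat \<Rightarrow> bool" where
  "valid_instance P \<beta> b p \<longleftrightarrow> wf_protocol P \<and> \<beta> < length (edges P) \<and>
      b \<in> msgs P \<beta> \<and> p \<in> states P (hd_e P \<beta>)"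

end

theory Submission
  imports Defs
begin


datatype ex = V nat | Cst nat | S ex | Rec ex ex ex

primrec ev :: "ex \<Rightarrow> nat list \<Rightarrow> nat" where
  "ev (V i) xs = (if i < length xs then xs ! i else 0)"
| "ev (Cst c) xs = c"
| "ev (S e) xs = Suc (ev e xs)"
| "ev (Rec a z s) xs = rec_nat (ev z xs) (\<lambda>i r. ev s (i # r # xs)) (ev a xs)"

definition rc :: "nat \<Rightarrow> (nat list \<Rightarrow> nat) \<Rightarrow> bool" where
  "rc k g \<longleftrightarrow> (\<exists>f. \<forall>xs. length xs = k \<longrightarrow> eval_recf f xs (g xs))"

lemma eval_const: "eval_recf (((\<lambda>f. RComp RSucc [f]) ^^ c) RZero) xs c"
proof (induction c)
  case 0 then show ?case by (simp add: eval_recf.zero)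
next
  case (Suc c)
  show ?case apply simp
    apply (rule eval_recf.comp[where zs="[c]"]) using Suc by (auto intro: eval_recf.succ)
qed

lemma eval_projs: "length xs = k \<Longrightarrow> \<forall>j<length (map RProj [0..<k]). eval_recf (map RProj [0..<k] ! j) xs (xs ! j)"
  by (auto intro: eval_recf.proj)

lemma rc_ev: "rc k (ev e)"
proof (induction e arbitrary: k)
  case (V i)
  show ?case unfolding rc_def
  proof (cases "i < k")
    case True
    then show "\<exists>f. \<forall>xs. length xs = k \<longrightarrow> eval_recf f xs (ev (V i) xs)"
      by (intro exI[of _ "RProj i"]) (auto intro: eval_recf.proj)
  next
    case False
    then show "\<exists>f. \<forall>xs. length xs = k \<longrightarrow> eval_recf f xs (ev (V i) xs)"
      by (intro exI[of _ RZero]) (auto intro: eval_recf.zero)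
  qed
next
  case (Cst c)
  then show ?case unfolding rc_def using eval_const by auto
next
  case (S e)
  then obtain f where f: "\<forall>xs. length xs = k \<longrightarrow> eval_recf f xs (ev e xs)" unfolding rc_def by blast
  show ?case unfolding rc_def
    apply (rule exI[of _ "RComp RSucc [f]"])
    apply clarify
    subgoal for xs apply (rule eval_recf.comp[where zs="[ev e xs]"]) using f by (auto intro: eval_recf.succ)
    done
next
  case (Rec a z s)
  from Rec.IH(1)[of k] obtain fa where fa: "\<forall>xs. length xs = k \<longrightarrow> eval_recf fa xs (ev a xs)" unfolding rc_def by blast
  from Rec.IH(2)[of k] obtain fz where fz: "\<forall>xs. length xs = k \<longrightarrow> eval_recf fz xs (ev z xs)" unfolding rc_def by blast
  from Rec.IH(3)[of "Suc (Suc k)"] obtain fs where fs: "\<forall>xs. length xs = Suc (Suc k) \<longrightarrow> eval_recf fs xs (ev s xs)" unfolding rc_def by blast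
  have P: "eval_recf (RPrec fz fs) (n # xs) (rec_nat (ev z xs) (\<lambda>i r. ev s (i # r # xs)) n)" if "length xs = k" for n xs
  proof (induction n)
    case 0 then show ?case using fz that by (auto intro: eval_recf.prec0)
  next
    case (Suc n) then show ?case using fs that by (auto intro: eval_recf.precS)
  qed
  show ?case unfolding rc_def
    apply (rule exI[of _ "RComp (RPrec fz fs) (fa # map RProj [0..<k])"])
    apply clarify
    subgoal for xs
      apply (rule eval_recf.comp[where zs="ev a xs # xs"])
        apply simp
      using fa apply (auto simp: nth_Cons' intro: eval_recf.proj)[1]
      using P by simp
    done
qed


fun sh :: "nat \<Rightarrow> nat \<Rightarrow> ex \<Rightarrow> ex" where
  "sh c d (V i) = V (if i < c then i else i + d)"
| "sh c d (Cst n) = Cst n"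
| "sh c d (S e) = S (sh c d e)"
| "sh c d (Rec a z s) = Rec (sh c d a) (sh c d z) (sh (c+2) d s)"

lemma ev_sh: "length us = c \<Longrightarrow> length ys = d \<Longrightarrow> ev (sh c d e) (us @ ys @ xs) = ev e (us @ xs)"
proof (induction e arbitrary: c us)
  case (V i)
  then show ?case by (auto simp: nth_append)
next
  case (Rec a z s)
  have "\<And>i r. ev (sh (c+2) d s) ((i # r # us) @ ys @ xs) = ev s ((i # r # us) @ xs)"
    using Rec by (intro Rec.IH(3)) auto
  then show ?case using Rec Rec.IH(1)[of us] Rec.IH(2)[of us] by simp
qed auto

lemma ev_sh01[simp]: "ev (sh 0 1 e) (v # xs) = ev e xs"
  using ev_sh[of "[]" 0 "[v]" 1 e xs] by simp
lemma ev_sh02[simp]: "ev (sh 0 2 e) (v # w # xs) = ev e xs"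
  using ev_sh[of "[]" 0 "[v,w]" 2 e xs] by simp
lemma ev_sh11[simp]: "ev (sh 1 1 e) (v # w # xs) = ev e (v # xs)"
  using ev_sh[of "[v]" 1 "[w]" 1 e xs] by simp

lemma ev_sh11'[simp]: "ev (sh (Suc 0) (Suc 0) e) (v # w # xs) = ev e (v # xs)"
  using ev_sh11 by simp

lemma ev_sh01'[simp]: "ev (sh 0 (Suc 0) e) (v # xs) = ev e xs"
  using ev_sh01 by simp

declare sh.simps[simp del]

definition "predE a = Rec a (Cst 0) (V 0)"
lemma ev_predE[simp]: "ev (predE a) xs = ev a xs - 1"
  unfolding predE_def by (cases "ev a xs") auto

definition "addE a b = Rec a b (S (V 1))"
lemma ev_addE[simp]: "ev (addE a b) xs = ev a xs + ev b xs"
proof -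
  have "\<And>n. rec_nat (ev b xs) (\<lambda>i r. Suc r) n = n + ev b xs" by (induct_tac n) auto
  then show ?thesis unfolding addE_def by simp
qed

definition "subE a b = Rec b a (predE (V 1))"
lemma ev_subE[simp]: "ev (subE a b) xs = ev a xs - ev b xs"
proof -
  have "\<And>n. rec_nat (ev a xs) (\<lambda>i r. r - 1) n = ev a xs - n" by (induct_tac n) auto
  then show ?thesis unfolding subE_def by simp
qed

definition "ifzE c a b = Rec c a (sh 0 2 b)"
lemma ev_ifzE[simp]: "ev (ifzE c a b) xs = (if ev c xs = 0 then ev a xs else ev b xs)"
  unfolding ifzE_def by (cases "ev c xs") auto

definition "triE a = Rec a (Cst 0) (addE (V 1) (S (V 0)))"
lemma ev_triE[simp]: "ev (triE a) xs = triangle (ev a xs)"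
proof -
  have "\<And>n. rec_nat 0 (\<lambda>i r. r + Suc i) n = triangle n" by (induct_tac n) auto
  then show ?thesis unfolding triE_def by simp
qed

definition "peE a b = addE (triE (addE a b)) a"
lemma ev_peE[simp]: "ev (peE a b) xs = prod_encode (ev a xs, ev b xs)"
  unfolding peE_def prod_encode_def by simp

definition "eqE a b = ifzE (addE (subE a b) (subE b a)) (Cst 1) (Cst 0)"
lemma ev_eqE[simp]: "ev (eqE a b) xs = (if ev a xs = ev b xs then 1 else 0)"
  unfolding eqE_def by auto

definition "ltE a b = ifzE (subE b a) (Cst 0) (Cst 1)"
lemma ev_ltE[simp]: "ev (ltE a b) xs = (if ev a xs < ev b xs then 1 else 0)"
  unfolding ltE_def by auto

definition "notE a = ifzE a (Cst 1) (Cst 0)"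
lemma ev_notE[simp]: "ev (notE a) xs = (if ev a xs = 0 then 1 else 0)"
  unfolding notE_def by auto

definition "andE a b = ifzE a (Cst 0) (ifzE b (Cst 0) (Cst 1))"
lemma ev_andE[simp]: "ev (andE a b) xs = (if ev a xs \<noteq> 0 \<and> ev b xs \<noteq> 0 then 1 else 0)"
  unfolding andE_def by auto

definition "orE a b = ifzE a (ifzE b (Cst 0) (Cst 1)) (Cst 1)"
lemma ev_orE[simp]: "ev (orE a b) xs = (if ev a xs \<noteq> 0 \<or> ev b xs \<noteq> 0 then 1 else 0)"
  unfolding orE_def by auto

definition "impE a b = orE (notE a) b"
lemma ev_impE[simp]: "ev (impE a b) xs = (if ev a xs \<noteq> 0 \<longrightarrow> ev b xs \<noteq> 0 then 1 else 0)"
  unfolding impE_def by auto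

definition "ballE bnd p = Rec bnd (Cst 1) (ifzE (V 1) (Cst 0) (ifzE (sh 1 1 p) (Cst 0) (Cst 1)))"
lemma ev_ballE[simp]: "ev (ballE bnd p) xs = (if \<forall>i<ev bnd xs. ev p (i # xs) \<noteq> 0 then 1 else 0)"
proof -
  have "\<And>n. rec_nat (Suc 0) (\<lambda>i r. if r = 0 then 0 else if ev p (i # xs) = 0 then 0 else Suc 0) n
     = (if \<forall>i<n. ev p (i # xs) \<noteq> 0 then Suc 0 else 0)"
    subgoal for n by (induct n) (auto simp: less_Suc_eq)
    done
  then show ?thesis unfolding ballE_def by (simp cong: if_cong)
qed

definition "bexE bnd p = notE (ballE bnd (notE p))"
lemma ev_bexE[simp]: "ev (bexE bnd p) xs = (if \<exists>i<ev bnd xs. ev p (i # xs) \<noteq> 0 then 1 else 0)"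
  unfolding bexE_def by auto

definition "bminE bnd p = Rec bnd (Cst 0) (ifzE (ltE (V 1) (V 0)) (ifzE (sh 1 1 p) (S (V 0)) (V 0)) (V 1))"
lemma ev_bminE: "ev (bminE bnd p) xs = (if \<exists>i<ev bnd xs. ev p (i # xs) \<noteq> 0 then LEAST i. ev p (i # xs) \<noteq> 0 else ev bnd xs)"
proof -
  let ?P = "\<lambda>i. ev p (i # xs) \<noteq> 0"
  have "\<And>n. rec_nat 0 (\<lambda>i r. if \<not> r < i then (if ev p (i # xs) = 0 then Suc i else i) else r) n
     = (if \<exists>i<n. ?P i then LEAST i. ?P i else n)"
  proof -
    fix n show "rec_nat 0 (\<lambda>i r. if \<not> r < i then (if ev p (i # xs) = 0 then Suc i else i) else r) n
     = (if \<exists>i<n. ?P i then LEAST i. ?P i else n)"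
    proof (induct n)
      case 0 then show ?case by simp
    next
      case (Suc n)
      show ?case
      proof (cases "\<exists>i<n. ?P i")
        case True
        then have "(LEAST i. ?P i) < n" by (meson LeastI less_le_trans not_less_Least not_le)
        moreover have "\<exists>i<Suc n. ?P i" using True less_SucI by blast
        ultimately show ?thesis using Suc True by auto
      next
        case False
        show ?thesis
        proof (cases "?P n")
          case True
          have "(LEAST i. ?P i) = n" using False True
            by (intro Least_equality) (auto simp: not_less)
          then show ?thesis using Suc False True by auto
        next
          case F2: False
          then have "\<not> (\<exists>i<Suc n. ?P i)" using False less_Suc_eq by auto
          then show ?thesis using Suc False F2 by auto
        qed
      qed
    qed
  qed
  note * = this
  have L: "\<And>i r. ev (ifzE (ltE (V 1) (V 0)) (ifzE (sh 1 1 p) (S (V 0)) (V 0)) (V 1)) (i#r#xs) = (if \<not> r < i then (if ev p (i#xs)=0 then Suc i else i) else r)"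
    by simp
  show ?thesis unfolding bminE_def ev.simps(4) L using * by simp
qed


definition "sE n = bminE (S n) (ltE (sh 0 1 n) (triE (S (V 0))))"

lemma triangle_ge: "n \<le> triangle n"
  by (induct n) auto

lemma ev_sE: "ev (sE n) xs = (LEAST s. ev n xs < triangle (Suc s))"
proof -
  have "ev n xs < triangle (Suc (ev n xs))" using triangle_ge[of "ev n xs"] by simp
  then have "\<exists>i<Suc (ev n xs). ev n xs < triangle (Suc i)" by blast
  then show ?thesis unfolding sE_def by (auto simp add: ev_bminE)
qed

lemma prod_decode_via_tri:
  fixes n :: nat
  defines "s \<equiv> LEAST s. n < triangle (Suc s)"
  shows "prod_decode n = (n - triangle s, s - (n - triangle s))"
proof -
  have ex: "n < triangle (Suc n)" using triangle_ge[of n] by simp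
  have s1: "n < triangle (Suc s)" unfolding s_def using LeastI[of "\<lambda>s. n < triangle (Suc s)", OF ex] .
  have s2: "triangle s \<le> n"
  proof (cases s)
    case 0 then show ?thesis by simp
  next
    case (Suc s')
    then have "s' < s" by simp
    then have "\<not> n < triangle (Suc s')" unfolding s_def by (rule not_less_Least)
    then show ?thesis using Suc by simp
  qed
  have a: "n - triangle s \<le> s" using s1 s2 by simp
  have "prod_encode (n - triangle s, s - (n - triangle s)) = n"
    unfolding prod_encode_def using a s2 by simp
  then show ?thesis by (metis prod_encode_inverse)
qed

definition "fstE n = subE n (triE (sE n))"
definition "sndE n = subE (sE n) (fstE n)"

lemma ev_fstE[simp]: "ev (fstE n) xs = fst (prod_decode (ev n xs))"
  unfolding fstE_def by (simp add: ev_sE prod_decode_via_tri)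
lemma ev_sndE[simp]: "ev (sndE n) xs = snd (prod_decode (ev n xs))"
  unfolding sndE_def fstE_def by (simp add: ev_sE prod_decode_via_tri)

definition "hdc c = fst (prod_decode (c - 1))"
definition "tlc c = snd (prod_decode (c - 1))"
definition "nthc c i = hdc ((tlc ^^ i) c)"
definition "lenc c = length (list_decode c)"

definition "hdcE c = fstE (predE c)"
definition "tlcE c = sndE (predE c)"
lemma ev_hdcE[simp]: "ev (hdcE c) xs = hdc (ev c xs)" unfolding hdcE_def hdc_def by simp
lemma ev_tlcE[simp]: "ev (tlcE c) xs = tlc (ev c xs)" unfolding tlcE_def tlc_def by simp

definition "tliE c i = Rec i c (tlcE (V 1))"
lemma ev_tliE[simp]: "ev (tliE c i) xs = (tlc ^^ ev i xs) (ev c xs)"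
proof -
  have "\<And>n. rec_nat (ev c xs) (\<lambda>i r. tlc r) n = (tlc ^^ n) (ev c xs)" by (induct_tac n) auto
  then show ?thesis unfolding tliE_def by simp
qed

definition "nthE c i = hdcE (tliE c i)"
lemma ev_nthE[simp]: "ev (nthE c i) xs = nthc (ev c xs) (ev i xs)"
  unfolding nthE_def nthc_def by simp

lemma tlc_list: "tlc c = list_encode (tl (list_decode c))"
proof (cases c)
  case 0 then show ?thesis by (simp add: tlc_def prod_decode_def prod_decode_aux.simps)
next
  case (Suc m) then show ?thesis by (simp add: tlc_def split: prod.split)
qed

lemma tlc_pow: "(tlc ^^ i) c = list_encode (drop i (list_decode c))"
  by (induct i) (auto simp: tlc_list drop_Suc tl_drop)

lemma hdc_cons: "hdc (list_encode (y # ys)) = y"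
  by (simp add: hdc_def)

lemma nthc_list: "i < length (list_decode c) \<Longrightarrow> nthc c i = list_decode c ! i"
  unfolding nthc_def tlc_pow
  by (metis Cons_nth_drop_Suc hdc_cons)

lemma nthc_enc[simp]: "i < length xs \<Longrightarrow> nthc (list_encode xs) i = xs ! i"
  using nthc_list[of i "list_encode xs"] by simp

lemma lenc_enc[simp]: "lenc (list_encode xs) = length xs"
  by (simp add: lenc_def)

lemma length_le_encode: "length xs \<le> list_encode xs"
proof (induct xs)
  case (Cons x xs)
  then show ?case using le_prod_encode_2[of "list_encode xs" x] by simp
qed simp

definition "lenE c = bminE (S c) (eqE (tliE (sh 0 1 c) (V 0)) (Cst 0))"
lemma ev_lenE[simp]: "ev (lenE c) xs = lenc (ev c xs)"
proof -
  let ?xs = "list_decode (ev c xs)"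
  have eq: "\<And>i. ((tlc ^^ i) (ev c xs) = 0) = (length ?xs \<le> i)"
    unfolding tlc_pow by (metis drop_eq_Nil list_encode.simps(1) list_encode_eq)
  have b: "length ?xs < Suc (ev c xs)" using length_le_encode[of ?xs] by simp
  have "(LEAST i. length ?xs \<le> i) = length ?xs" by (rule Least_equality) auto
  then show ?thesis unfolding lenE_def ev_bminE using b by (auto simp add: eq lenc_def)
qed


definition dq :: "nat list \<Rightarrow> nat list set \<Rightarrow> nat list set" where "dq u L = {z. u @ z \<in> L}"
definition conc :: "nat list set \<Rightarrow> nat list set \<Rightarrow> nat list set" where "conc A B = {u @ v | u v. u \<in> A \<and> v \<in> B}"

lemma concI: "x \<in> A \<Longrightarrow> y \<in> B \<Longrightarrow> x @ y \<in> conc A B"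
  unfolding conc_def by blast

lemma star_append: "x \<in> star_lang A \<Longrightarrow> y \<in> star_lang A \<Longrightarrow> x @ y \<in> star_lang A"
  by (induction x rule: star_lang.induct) (auto intro: star_lang.intros)

lemma star_single: "a \<in> A \<Longrightarrow> a \<in> star_lang A"
  using star_lang.star_app[OF _ star_lang.star_nil, of a A] by simp

lemma dq_times: "dq u (conc A B) = conc (dq u A) B \<union> \<Union> {dq v B | v. \<exists>w. u = w @ v \<and> w \<in> A}"
proof (intro set_eqI iffI)
  fix z assume "z \<in> dq u (conc A B)"
  then obtain a b where ab: "u @ z = a @ b" "a \<in> A" "b \<in> B" unfolding dq_def conc_def by auto
  then obtain us where "(u = a @ us \<and> us @ z = b) \<or> (u @ us = a \<and> z = us @ b)"
    by (auto simp: append_eq_append_conv2)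
  then show "z \<in> conc (dq u A) B \<union> \<Union> {dq v B | v. \<exists>w. u = w @ v \<and> w \<in> A}"
  proof
    assume "u = a @ us \<and> us @ z = b"
    then show ?thesis using ab unfolding dq_def by auto
  next
    assume "u @ us = a \<and> z = us @ b"
    then show ?thesis using ab unfolding dq_def conc_def by auto
  qed
next
  fix z assume "z \<in> conc (dq u A) B \<union> \<Union> {dq v B | v. \<exists>w. u = w @ v \<and> w \<in> A}"
  then show "z \<in> dq u (conc A B)"
  proof
    assume "z \<in> conc (dq u A) B"
    then obtain x y where h: "z = x @ y" "u @ x \<in> A" "y \<in> B" by (auto simp: conc_def dq_def)
    have "(u @ x) @ y \<in> conc A B" by (rule concI[OF h(2) h(3)])
    then show ?thesis using h(1) by (simp add: dq_def)
  next
    assume "z \<in> \<Union> {dq v B | v. \<exists>w. u = w @ v \<and> w \<in> A}"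
    then obtain v w where h: "v @ z \<in> B" "u = w @ v" "w \<in> A" by (auto simp: dq_def)
    have "w @ (v @ z) \<in> conc A B" by (rule concI[OF h(3) h(1)])
    then show ?thesis using h(2) by (simp add: dq_def)
  qed
qed

lemma star_split: "x \<in> star_lang A \<Longrightarrow> x = u @ z \<Longrightarrow>
   (u \<in> star_lang A \<and> z \<in> star_lang A) \<or>
   (\<exists>w v z1 z2. u = w @ v \<and> w \<in> star_lang A \<and> z = z1 @ z2 \<and> v @ z1 \<in> A \<and> z2 \<in> star_lang A)"
proof (induction x arbitrary: u z rule: star_lang.induct)
  case star_nil
  then show ?case by (auto intro: star_lang.intros)
next
  case (star_app a rest)
  then obtain us where "(a = u @ us \<and> us @ rest = z) \<or> (a @ us = u \<and> rest = us @ z)"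
    by (auto simp: append_eq_append_conv2)
  then show ?case
  proof
    assume h: "a = u @ us \<and> us @ rest = z"
    show ?thesis
      apply (rule disjI2)
      apply (rule exI[of _ "[]"], rule exI[of _ u], rule exI[of _ us], rule exI[of _ rest])
      using h star_app by (auto intro: star_lang.intros)
  next
    assume h: "a @ us = u \<and> rest = us @ z"
    have "(us \<in> star_lang A \<and> z \<in> star_lang A) \<or>
   (\<exists>w v z1 z2. us = w @ v \<and> w \<in> star_lang A \<and> z = z1 @ z2 \<and> v @ z1 \<in> A \<and> z2 \<in> star_lang A)"
      using star_app.IH[of us z] h by simp
    then show ?thesis
    proof
      assume "us \<in> star_lang A \<and> z \<in> star_lang A"
      then show ?thesis using h star_app by (auto intro: star_lang.intros)
    next
      assume "\<exists>w v z1 z2. us = w @ v \<and> w \<in> star_lang A \<and> z = z1 @ z2 \<and> v @ z1 \<in> A \<and> z2 \<in> star_lang A"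
      then obtain w v z1 z2 where "us = w @ v" "w \<in> star_lang A" "z = z1 @ z2" "v @ z1 \<in> A" "z2 \<in> star_lang A" by blast
      then show ?thesis using h star_app
        apply (intro disjI2)
        apply (rule exI[of _ "a @ w"], rule exI[of _ v], rule exI[of _ z1], rule exI[of _ z2])
        by (auto intro: star_lang.intros)
    qed
  qed
qed

lemma dq_star: "dq u (star_lang A) = (if u \<in> star_lang A then star_lang A else {}) \<union>
   \<Union> {conc (dq v A) (star_lang A) | v. \<exists>w. u = w @ v \<and> w \<in> star_lang A}"
proof (intro set_eqI iffI)
  fix z assume "z \<in> dq u (star_lang A)"
  then have "u @ z \<in> star_lang A" unfolding dq_def by auto
  from star_split[OF this refl]
  show "z \<in> (if u \<in> star_lang A then star_lang A else {}) \<union>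
   \<Union> {conc (dq v A) (star_lang A) | v. \<exists>w. u = w @ v \<and> w \<in> star_lang A}"
  proof
    assume "u \<in> star_lang A \<and> z \<in> star_lang A"
    then show ?thesis by simp
  next
    assume "\<exists>w v z1 z2. u = w @ v \<and> w \<in> star_lang A \<and> z = z1 @ z2 \<and> v @ z1 \<in> A \<and> z2 \<in> star_lang A"
    then obtain w v z1 z2 where h: "u = w @ v" "w \<in> star_lang A" "z = z1 @ z2" "v @ z1 \<in> A" "z2 \<in> star_lang A" by blast
    have "v @ z1 \<in> A" by (rule h(4))
    then have "z1 \<in> dq v A" by (simp add: dq_def)
    then have "z1 @ z2 \<in> conc (dq v A) (star_lang A)" using h(5) by (rule concI)
    then have "z \<in> conc (dq v A) (star_lang A)" using h(3) by simp
    moreover have "conc (dq v A) (star_lang A) \<in> {conc (dq v A) (star_lang A) | v. \<exists>w. u = w @ v \<and> w \<in> star_lang A}"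
      using h(1,2) by blast
    ultimately show ?thesis by (meson UnI2 UnionI)
  qed
next
  fix z assume "z \<in> (if u \<in> star_lang A then star_lang A else {}) \<union>
   \<Union> {conc (dq v A) (star_lang A) | v. \<exists>w. u = w @ v \<and> w \<in> star_lang A}"
  then show "z \<in> dq u (star_lang A)"
  proof
    assume "z \<in> (if u \<in> star_lang A then star_lang A else {})"
    then show ?thesis unfolding dq_def by (auto split: if_splits intro: star_append)
  next
    assume "z \<in> \<Union> {conc (dq v A) (star_lang A) | v. \<exists>w. u = w @ v \<and> w \<in> star_lang A}"
    then obtain v w z1 z2 where "u = w @ v" "w \<in> star_lang A" "z = z1 @ z2" "v @ z1 \<in> A" "z2 \<in> star_lang A"
      unfolding dq_def conc_def by auto
    then show ?thesis unfolding dq_def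
      using star_append[OF \<open>w \<in> star_lang A\<close> star_append[OF star_single[OF \<open>v @ z1 \<in> A\<close>] \<open>z2 \<in> star_lang A\<close>]]
      by simp
  qed
qed

lemma dq_Un: "dq u (A \<union> B) = dq u A \<union> dq u B"
  by (auto simp: dq_def)

lemma range_sub: "(\<And>u. f u = g (h u)) \<Longrightarrow> (\<And>u. h u \<in> B) \<Longrightarrow> range f \<subseteq> g ` B"
  by (metis image_subset_iff rangeI image_eqI)

lemma finite_dq: "finite (range (\<lambda>u. dq u (lang r)))"
proof (induction r)
  case ZeroR
  have "range (\<lambda>u. dq u (lang ZeroR)) \<subseteq> {{}}" by (auto simp: dq_def)
  then show ?case using finite_subset by blast
next
  case OneR
  have "range (\<lambda>u. dq u (lang OneR)) \<subseteq> {{[]}, {}}" by (auto simp: dq_def)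
  then show ?case using finite_subset by blast
next
  case (AtomR a)
  have "range (\<lambda>u. dq u (lang (AtomR a))) \<subseteq> {{[a]}, {[]}, {}}"
  proof
    fix X assume "X \<in> range (\<lambda>u. dq u (lang (AtomR a)))"
    then obtain u where X: "X = dq u {[a]}" by auto
    show "X \<in> {{[a]}, {[]}, {}}"
    proof (cases u)
      case Nil then show ?thesis using X by (auto simp: dq_def)
    next
      case (Cons c u')
      then show ?thesis using X by (cases u') (auto simp: dq_def)
    qed
  qed
  then show ?case using finite_subset by blast
next
  case (PlusR r s)
  have "range (\<lambda>u. dq u (lang (PlusR r s))) \<subseteq> (\<lambda>(X, Y). X \<union> Y) ` (range (\<lambda>u. dq u (lang r)) \<times> range (\<lambda>u. dq u (lang s)))"
    by (rule range_sub[where h="\<lambda>u. (dq u (lang r), dq u (lang s))"]) (simp_all add: dq_Un)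
  then show ?case by (rule finite_subset) (simp add: PlusR.IH)
next
  case (TimesR r s)
  have eq: "lang (TimesR r s) = conc (lang r) (lang s)" by (simp add: conc_def)
  have "range (\<lambda>u. dq u (lang (TimesR r s))) \<subseteq> (\<lambda>(X, Y). conc X (lang s) \<union> \<Union> Y) ` (range (\<lambda>u. dq u (lang r)) \<times> Pow (range (\<lambda>u. dq u (lang s))))"
  proof (rule range_sub[where h="\<lambda>u. (dq u (lang r), {dq v (lang s) | v. \<exists>w. u = w @ v \<and> w \<in> lang r})"])
    fix u show "dq u (lang (TimesR r s)) = (case (dq u (lang r), {dq v (lang s) | v. \<exists>w. u = w @ v \<and> w \<in> lang r}) of (X, Y) \<Rightarrow> conc X (lang s) \<union> \<Union> Y)"
      unfolding eq dq_times prod.case ..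
    show "(dq u (lang r), {dq v (lang s) | v. \<exists>w. u = w @ v \<and> w \<in> lang r}) \<in> range (\<lambda>u. dq u (lang r)) \<times> Pow (range (\<lambda>u. dq u (lang s)))"
      unfolding mem_Times_iff fst_conv snd_conv Pow_iff by (intro conjI rangeI) blast
  qed
  then show ?case by (rule finite_subset) (simp add: TimesR.IH)
next
  case (StarR r)
  let ?A = "lang r"
  have eq: "lang (StarR r) = star_lang ?A" by simp
  have "range (\<lambda>u. dq u (lang (StarR r))) \<subseteq> (\<lambda>(bb, Y). (if bb then star_lang ?A else {}) \<union> \<Union> ((\<lambda>X. conc X (star_lang ?A)) ` Y)) ` (UNIV \<times> Pow (range (\<lambda>u. dq u ?A)))"
  proof (rule range_sub[where h="\<lambda>u. (u \<in> star_lang ?A, {dq v ?A | v. \<exists>w. u = w @ v \<and> w \<in> star_lang ?A})"])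
    fix u
    have "\<Union> {conc (dq v ?A) (star_lang ?A) | v. \<exists>w. u = w @ v \<and> w \<in> star_lang ?A}
       = \<Union> ((\<lambda>X. conc X (star_lang ?A)) ` {dq v ?A | v. \<exists>w. u = w @ v \<and> w \<in> star_lang ?A})"
      by (intro arg_cong[where f=Union]) blast
    then show "dq u (lang (StarR r)) = (case (u \<in> star_lang ?A, {dq v ?A | v. \<exists>w. u = w @ v \<and> w \<in> star_lang ?A}) of (bb, Y) \<Rightarrow> (if bb then star_lang ?A else {}) \<union> \<Union> ((\<lambda>X. conc X (star_lang ?A)) ` Y))"
      unfolding eq dq_star prod.case by simp
    show "(u \<in> star_lang ?A, {dq v ?A | v. \<exists>w. u = w @ v \<and> w \<in> star_lang ?A}) \<in> UNIV \<times> Pow (range (\<lambda>u. dq u ?A))"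
      unfolding mem_Times_iff fst_conv snd_conv Pow_iff by (intro conjI UNIV_I) blast
  qed
  moreover have "finite (UNIV \<times> Pow (range (\<lambda>u. dq u ?A)) :: (bool \<times> _) set)" using StarR by simp
  ultimately show ?case by (rule finite_subset[OF _ finite_imageI])
qed

definition ctx :: "nat list set \<Rightarrow> nat list \<Rightarrow> (nat list \<times> nat list) set" where
  "ctx L u = {(x, y). x @ u @ y \<in> L}"

lemma finite_ctx:
  assumes "regular L" shows "finite (range (ctx L))"
proof -
  obtain r where L: "L = lang r" using assms unfolding regular_def by auto
  let ?Q = "range (\<lambda>x. dq x L)"
  have fQ: "finite ?Q" using finite_dq[of r] L by simp
 define gr where "gr u = {(K, dq u K) | K. K \<in> ?Q}" for u
  define Psi where "Psi (G :: (nat list set \<times> nat list set) set) = {(x, y). \<exists>K'. (dq x L, K') \<in> G \<and> y \<in> K'}" for G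
  have "range (ctx L) \<subseteq> Psi ` Pow (?Q \<times> ?Q)"
  proof
    fix Z assume "Z \<in> range (ctx L)"
    then obtain u where Z: "Z = ctx L u" by auto
    have dqdq: "dq u (dq x L) = dq (x @ u) L" for x by (auto simp: dq_def)
    have "Z = Psi (gr u)"
      unfolding Z Psi_def gr_def ctx_def
      by (auto simp: dqdq) (auto simp: dq_def)
    moreover have "gr u \<in> Pow (?Q \<times> ?Q)" unfolding gr_def by (auto simp: dqdq)
    ultimately show "Z \<in> Psi ` Pow (?Q \<times> ?Q)" by blast
  qed
  then show ?thesis by (rule finite_subset) (simp add: fQ)
qed


declare list_encode.simps[simp del]

definition "prC n = nthc n 0"
definition "EC n = nthc (prC n) 0"
definition "MC n = nthc (prC n) 1"
definition "nEC n = lenc (EC n)"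
definition "nMC n = lenc (MC n)"
definition "betaC n = nthc n 1"
definition "bC n = nthc n 2"
definition "pC n = nthc n 3"
definition "tlC n x = nthc (nthc (EC n) x) 0"
definition "hdC n x = nthc (nthc (EC n) x) 1"
definition "msC n x = nthc (nthc (EC n) x) 2"
definition "initC n j = nthc (nthc (MC n) j) 1"
definition "trC n j = nthc (nthc (MC n) j) 2"
definition "trf n j u f = nthc (nthc (trC n j) u) f"
definition "memC n x a \<longleftrightarrow> (\<exists>k<lenc (msC n x). nthc (msC n x) k = a)"

lemma enc_edge_eq: "enc_edge e = list_encode [fst e, fst (snd e), list_encode (snd (snd e))]"
  by (cases e) (simp add: enc_edge_def)
lemma enc_machine_eq: "enc_machine m = list_encode [list_encode (fst m), fst (snd m), list_encode (map enc_trans (snd (snd m)))]"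
  by (cases m) (simp add: enc_machine_def)
lemma enc_trans_eq: "enc_trans t = list_encode [fst t, if fst (snd t) then 1 else 0, fst (snd (snd t)), snd (snd (snd t))]"
  by (cases t) (simp add: enc_trans_def)

definition trl :: "protocol \<Rightarrow> nat \<Rightarrow> trans list" where "trl P j = snd (snd (machines P ! j))"
definition msl :: "protocol \<Rightarrow> nat \<Rightarrow> nat list" where "msl P x = snd (snd (edges P ! x))"

locale inst =
  fixes P :: protocol and \<beta> b p n :: nat
  assumes n_def: "n = enc_instance P \<beta> b p"
begin

lemma prC: "prC n = enc_protocol P" by (simp add: prC_def n_def enc_instance_def)
lemma EC: "EC n = list_encode (map enc_edge (edges P))" by (simp add: EC_def prC enc_protocol_def)
lemma MC: "MC n = list_encode (map enc_machine (machines P))" by (simp add: MC_def prC enc_protocol_def)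
lemma nEC[simp]: "nEC n = length (edges P)" by (simp add: nEC_def EC)
lemma nMC[simp]: "nMC n = length (machines P)" by (simp add: nMC_def MC)
lemma betaC[simp]: "betaC n = \<beta>" by (simp add: betaC_def n_def enc_instance_def)
lemma bC[simp]: "bC n = b" by (simp add: bC_def n_def enc_instance_def)
lemma pC[simp]: "pC n = p" by (simp add: pC_def n_def enc_instance_def)

lemma tlC[simp]: "x < length (edges P) \<Longrightarrow> tlC n x = tl_e P x"
  by (simp add: tlC_def EC enc_edge_eq tl_e_def)
lemma hdC[simp]: "x < length (edges P) \<Longrightarrow> hdC n x = hd_e P x"
  by (simp add: hdC_def EC enc_edge_eq hd_e_def)
lemma msC: "x < length (edges P) \<Longrightarrow> msC n x = list_encode (msl P x)"
  by (simp add: msC_def EC enc_edge_eq msl_def)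
lemma memC[simp]: "x < length (edges P) \<Longrightarrow> memC n x a \<longleftrightarrow> a \<in> msgs P x"
  by (auto simp: memC_def msC msgs_def msl_def in_set_conv_nth)
lemma initC[simp]: "j < length (machines P) \<Longrightarrow> initC n j = init P j"
  by (simp add: initC_def MC enc_machine_eq init_def)
lemma trC: "j < length (machines P) \<Longrightarrow> trC n j = list_encode (map enc_trans (trl P j))"
  by (simp add: trC_def MC enc_machine_eq trl_def)
lemma len_trC[simp]: "j < length (machines P) \<Longrightarrow> lenc (trC n j) = length (trl P j)"
  by (simp add: trC)
lemma trf0[simp]: "j < length (machines P) \<Longrightarrow> u < length (trl P j) \<Longrightarrow> trf n j u 0 = fst (trl P j ! u)"
  by (simp add: trf_def trC enc_trans_eq)
lemma trf1[simp]: "j < length (machines P) \<Longrightarrow> u < length (trl P j) \<Longrightarrow> trf n j u 1 = (if fst (snd (trl P j ! u)) then 1 else 0)"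
  by (simp add: trf_def trC enc_trans_eq)
lemma trf1'[simp]: "j < length (machines P) \<Longrightarrow> u < length (trl P j) \<Longrightarrow> trf n j u (Suc 0) = (if fst (snd (trl P j ! u)) then Suc 0 else 0)"
  using trf1 by simp
lemma trf2[simp]: "j < length (machines P) \<Longrightarrow> u < length (trl P j) \<Longrightarrow> trf n j u 2 = fst (snd (snd (trl P j ! u)))"
  by (simp add: trf_def trC enc_trans_eq)
lemma trf3[simp]: "j < length (machines P) \<Longrightarrow> u < length (trl P j) \<Longrightarrow> trf n j u 3 = snd (snd (snd (trl P j ! u)))"
  by (simp add: trf_def trC enc_trans_eq)

lemma trans_nth: "trans P j = set (trl P j)" by (simp add: trans_def trl_def)

lemma trans_ex: "tr \<in> trans P j \<Longrightarrow> \<exists>u<length (trl P j). trl P j ! u = tr"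
  by (simp add: trans_nth in_set_conv_nth)

end

definition "updC s s' i v \<longleftrightarrow> lenc s' = lenc s \<and> (\<forall>j<lenc s. nthc s' j = (if j = i then v else nthc s j))"
definition "appC x y a \<longleftrightarrow> lenc y = Suc (lenc x) \<and> (\<forall>k<lenc x. nthc y k = nthc x k) \<and> nthc y (lenc x) = a"

lemma updC_iff: "updC s s' i v \<longleftrightarrow> list_decode s' = (list_decode s)[i := v]"
proof
  assume h: "updC s s' i v"
  show "list_decode s' = (list_decode s)[i := v]"
    apply (rule nth_equalityI)
    using h by (auto simp: updC_def lenc_def nthc_list nth_list_update)
next
  assume h: "list_decode s' = (list_decode s)[i := v]"
  then have "length (list_decode s') = length (list_decode s)" by simp
  then show "updC s s' i v" using h
    by (auto simp: updC_def lenc_def nthc_list nth_list_update)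
qed

lemma appC_iff: "appC x y a \<longleftrightarrow> list_decode y = list_decode x @ [a]"
proof
  assume h: "appC x y a"
  show "list_decode y = list_decode x @ [a]"
    apply (rule nth_equalityI)
    using h apply (simp add: appC_def lenc_def)
    using h by (auto simp: appC_def lenc_def nthc_list nth_append less_Suc_eq)
next
  assume h: "list_decode y = list_decode x @ [a]"
  then show "appC x y a" by (auto simp: appC_def lenc_def nthc_list nth_append)
qed

lemma lenc_pos_hd: "0 < lenc c \<Longrightarrow> nthc c 0 = a \<Longrightarrow> \<exists>w. list_decode c = a # w"
  by (cases "list_decode c") (auto simp: lenc_def nthc_list)

definition gdec :: "nat \<Rightarrow> gstate" where
  "gdec g = (list_decode (nthc g 0), map list_decode (list_decode (nthc g 1)))"
definition encg :: "gstate \<Rightarrow> nat" where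
  "encg G = list_encode [list_encode (fst G), list_encode (map list_encode (snd G))]"

lemma gdec_encg[simp]: "gdec (encg G) = G"
  by (simp add: gdec_def encg_def comp_def)

lemma nthc_encg0[simp]: "nthc (encg G) 0 = list_encode (fst G)" by (simp add: encg_def)
lemma nthc_encg1[simp]: "nthc (encg G) 1 = list_encode (map list_encode (snd G))" by (simp add: encg_def)
lemma nthc_encg1'[simp]: "nthc (encg G) (Suc 0) = list_encode (map list_encode (snd G))" by (simp add: encg_def)

lemma reach_inv: "reachable P (SS, CC) \<Longrightarrow> length SS = length (machines P) \<and> length CC = length (edges P) \<and>
   (\<forall>x<length (edges P). set (CC ! x) \<subseteq> msgs P x)"
proof -
  have "(step P)\<^sup>*\<^sup>* (initial_gstate P) G \<Longrightarrow> length (fst G) = length (machines P) \<and> length (snd G) = length (edges P) \<and>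
   (\<forall>x<length (edges P). set (snd G ! x) \<subseteq> msgs P x)" for G
  proof (induction rule: rtranclp_induct)
    case base then show ?case by (simp add: initial_gstate_def)
  next
    case (step y z)
    from step.hyps(2) step.IH show ?case
    proof (cases rule: step.cases)
      case (send i \<beta> b S0 q C0)
      then show ?thesis using step.IH by (auto simp: nth_list_update)
    next
      case (recv i \<beta> b S0 q C0 w)
      then show ?thesis using step.IH
        apply (auto simp: nth_list_update)
        by (metis insert_subset list.simps(15) subset_code(1))
    qed
  qed
  then show "reachable P (SS, CC) \<Longrightarrow> ?thesis" unfolding reachable_def by fastforce
qed

lemma reach_states: "wf_protocol P \<Longrightarrow> reachable P (SS, CC) \<Longrightarrow> \<forall>j<length (machines P). SS ! j \<in> states P j"
proof -
  assume wf: "wf_protocol P"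
  have "(step P)\<^sup>*\<^sup>* (initial_gstate P) G \<Longrightarrow> length (fst G) = length (machines P) \<and> (\<forall>j<length (machines P). fst G ! j \<in> states P j)" for G
  proof (induction rule: rtranclp_induct)
    case base then show ?case using wf by (simp add: initial_gstate_def wf_protocol_def)
  next
    case (step y z)
    from step.hyps(2) step.IH show ?case
    proof (cases rule: step.cases)
      case (send i \<beta> b S0 q C0)
      have "q \<in> states P i" using wf send unfolding wf_protocol_def by blast
      then show ?thesis using step.IH send by (auto simp: nth_list_update)
    next
      case (recv i \<beta> b S0 q C0 w)
      have "q \<in> states P i" using wf recv unfolding wf_protocol_def by blast
      then show ?thesis using step.IH recv by (auto simp: nth_list_update)
    qed
  qed
  then show "reachable P (SS, CC) \<Longrightarrow> ?thesis" unfolding reachable_def by fastforce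
qed


definition "initOK n g \<longleftrightarrow> lenc (nthc g 0) = nMC n \<and> (\<forall>j<nMC n. nthc (nthc g 0) j = initC n j) \<and>
   lenc (nthc g 1) = nEC n \<and> (\<forall>x<nEC n. nthc (nthc g 1) x = 0)"

definition "stepOK n g g' \<longleftrightarrow> lenc (nthc g 0) = nMC n \<and> lenc (nthc g 1) = nEC n \<and>
 (\<exists>i<nMC n. \<exists>x<nEC n. \<exists>u<lenc (trC n i).
   nthc (nthc g 0) i = trf n i u 0 \<and> memC n x (trf n i u 2) \<and> updC (nthc g 0) (nthc g' 0) i (trf n i u 3) \<and>
   updC (nthc g 1) (nthc g' 1) x (nthc (nthc g' 1) x) \<and>
   ((trf n i u 1 = 1 \<and> tlC n x = i \<and> appC (nthc (nthc g 1) x) (nthc (nthc g' 1) x) (trf n i u 2)) \<or>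
    (trf n i u 1 = 0 \<and> hdC n x = i \<and> nthc (nthc g 1) x = Suc (prod_encode (trf n i u 2, nthc (nthc g' 1) x)))))"

definition "finalOK n g \<longleftrightarrow> nthc (nthc g 0) (hdC n (betaC n)) = pC n \<and>
   0 < lenc (nthc (nthc g 1) (betaC n)) \<and> nthc (nthc (nthc g 1) (betaC n)) 0 = bC n"

definition "yesOK n t \<longleftrightarrow> nthc t 0 = 0 \<and> 0 < lenc (nthc t 1) \<and> initOK n (nthc (nthc t 1) 0) \<and>
  (\<forall>k<lenc (nthc t 1). Suc k < lenc (nthc t 1) \<longrightarrow> stepOK n (nthc (nthc t 1) k) (nthc (nthc t 1) (Suc k))) \<and>
  (\<forall>k<lenc (nthc t 1). Suc k = lenc (nthc t 1) \<longrightarrow> finalOK n (nthc (nthc t 1) k))"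

lemma list_decode_Suc_pe[simp]: "list_decode (Suc (prod_encode (a, y))) = a # list_decode y"
  by simp

lemma list_decode_eq_Nil: "list_decode c = [] \<longleftrightarrow> c = 0"
  by (metis list_decode_inverse list_encode.simps(1) list_encode_inverse)

lemma list_encode_Cons: "list_encode (a # w) = Suc (prod_encode (a, list_encode w))"
  by (simp add: list_encode.simps)

context inst begin

lemma initOK_sound: "initOK n g \<Longrightarrow> gdec g = initial_gstate P"
proof -
  assume h: "initOK n g"
  have 1: "list_decode (nthc g 0) = map (init P) [0..<length (machines P)]"
    apply (rule nth_equalityI)
    using h by (auto simp: initOK_def lenc_def nthc_list)
  have 2: "map list_decode (list_decode (nthc g 1)) = replicate (length (edges P)) []"
    apply (rule nth_equalityI)
    using h by (auto simp: initOK_def lenc_def nthc_list list_decode_eq_Nil)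
  show ?thesis using 1 2 by (simp add: gdec_def initial_gstate_def)
qed

lemma initOK_complete: "initOK n (encg (initial_gstate P))"
  by (simp add: initOK_def initial_gstate_def list_encode.simps)

lemma stepOK_sound: "stepOK n g g' \<Longrightarrow> step P (gdec g) (gdec g')"
proof -
  assume h: "stepOK n g g'"
  define S where "S = list_decode (nthc g 0)"
  define Cl where "Cl = list_decode (nthc g 1)"
  define C where "C = map list_decode Cl"
  have lS: "length S = length (machines P)" using h by (simp add: stepOK_def S_def lenc_def)
  have lC: "length Cl = length (edges P)" using h by (simp add: stepOK_def Cl_def lenc_def)
  from h obtain i x u where iu: "i < length (machines P)" "x < length (edges P)" "u < length (trl P i)"
    and c1: "nthc (nthc g 0) i = trf n i u 0" and c2: "memC n x (trf n i u 2)"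
    and c3: "updC (nthc g 0) (nthc g' 0) i (trf n i u 3)"
    and c4: "updC (nthc g 1) (nthc g' 1) x (nthc (nthc g' 1) x)"
    and c5: "(trf n i u 1 = 1 \<and> tlC n x = i \<and> appC (nthc (nthc g 1) x) (nthc (nthc g' 1) x) (trf n i u 2)) \<or>
    (trf n i u 1 = 0 \<and> hdC n x = i \<and> nthc (nthc g 1) x = Suc (prod_encode (trf n i u 2, nthc (nthc g' 1) x)))"
    unfolding stepOK_def by auto
  obtain p' s b' q where tr: "trl P i ! u = (p', s, b', q)" by (metis prod_cases4)
  have trin: "(p', s, b', q) \<in> trans P i" using iu tr by (metis nth_mem trans_nth)
  have Si: "S ! i = p'" using c1 iu tr lS by (simp add: S_def nthc_list lenc_def)
  have bm: "b' \<in> msgs P x" using c2 iu tr by simp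
  have S': "list_decode (nthc g' 0) = S[i := q]" using c3 iu tr by (simp add: updC_iff S_def)
  define y where "y = nthc (nthc g' 1) x"
  have C': "map list_decode (list_decode (nthc g' 1)) = C[x := list_decode y]"
    using c4 by (simp add: updC_iff C_def Cl_def y_def map_update)
  have Cx: "C ! x = list_decode (nthc (nthc g 1) x)" using iu lC by (simp add: C_def Cl_def nthc_list lenc_def)
  have gd: "gdec g = (S, C)" by (simp add: gdec_def S_def C_def Cl_def)
  from c5 show ?thesis
  proof
    assume "trf n i u 1 = 1 \<and> tlC n x = i \<and> appC (nthc (nthc g 1) x) (nthc (nthc g' 1) x) (trf n i u 2)"
    then have s: "s" and tl: "tl_e P x = i" and ap: "list_decode y = C ! x @ [b']"
      using iu tr by (auto simp: appC_iff y_def Cx split: if_splits)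
    have "gdec g' = (S[i := q], C[x := C ! x @ [b']])" using S' C' ap by (simp add: gdec_def)
    moreover have "step P (S, C) (S[i := q], C[x := C ! x @ [b']])"
      using iu bm tl trin Si s by (intro step.send) auto
    ultimately show ?thesis using gd by simp
  next
    assume "trf n i u 1 = 0 \<and> hdC n x = i \<and> nthc (nthc g 1) x = Suc (prod_encode (trf n i u 2, nthc (nthc g' 1) x))"
    then have s: "\<not> s" and hd: "hd_e P x = i" and rc: "C ! x = b' # list_decode y"
      using iu tr by (auto simp: y_def Cx split: if_splits)
    have "gdec g' = (S[i := q], C[x := list_decode y])" using S' C' by (simp add: gdec_def)
    moreover have "step P (S, C) (S[i := q], C[x := list_decode y])"
      using iu bm hd trin Si s rc by (intro step.recv) auto
    ultimately show ?thesis using gd by simp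
  qed
qed

lemma stepOK_complete:
  assumes r: "reachable P G" and st: "step P G G'"
  shows "stepOK n (encg G) (encg G')"
  using st
proof (cases rule: step.cases)
  case (send i x b' S0 q C0)
  have inv: "length S0 = length (machines P)" "length C0 = length (edges P)"
    using reach_inv[of P S0 C0] r send by (auto)
  obtain u where u: "u < length (trl P i)" "trl P i ! u = (S0 ! i, True, b', q)"
    using trans_ex[OF send(7)] by blast
  have a: "updC (list_encode S0) (list_encode (S0[i := q])) i q" by (simp add: updC_iff)
  have b: "updC (list_encode (map list_encode C0)) (list_encode (map list_encode (C0[x := C0 ! x @ [b']]))) x
     (list_encode (C0 ! x @ [b']))" by (simp add: updC_iff map_update)
  have c: "appC (list_encode (C0 ! x)) (list_encode (C0 ! x @ [b'])) b'" by (simp add: appC_iff)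
  show ?thesis unfolding stepOK_def
    using send inv u a b c
    apply (simp add: send)
    apply (rule_tac x=i in exI, rule conjI, simp add: send)
    apply (rule_tac x=x in exI, rule conjI, simp add: send)
    apply (rule_tac x=u in exI, rule conjI, simp add: send)
    apply (simp add: send)
    done
next
  case (recv i x b' S0 q C0 w)
  have inv: "length S0 = length (machines P)" "length C0 = length (edges P)"
    using reach_inv[of P S0 C0] r recv by (auto)
  obtain u where u: "u < length (trl P i)" "trl P i ! u = (S0 ! i, False, b', q)"
    using trans_ex[OF recv(7)] by blast
  have a: "updC (list_encode S0) (list_encode (S0[i := q])) i q" by (simp add: updC_iff)
  have b: "updC (list_encode (map list_encode C0)) (list_encode (map list_encode (C0[x := w]))) x
     (list_encode w)" by (simp add: updC_iff map_update)
  have c: "list_encode (C0 ! x) = Suc (prod_encode (b', list_encode w))" using recv by (simp add: list_encode_Cons)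
  show ?thesis unfolding stepOK_def
    using recv inv u a b c
    apply (simp add: recv)
    apply (rule_tac x=i in exI, rule conjI, simp add: recv)
    apply (rule_tac x=x in exI, rule conjI, simp add: recv)
    apply (rule_tac x=u in exI, rule conjI, simp add: recv)
    apply (simp add: recv)
    done
qed

end


lemma rtranclp_path: "r\<^sup>*\<^sup>* a c \<Longrightarrow> \<exists>xs. xs \<noteq> [] \<and> hd xs = a \<and> last xs = c \<and> (\<forall>k. Suc k < length xs \<longrightarrow> r (xs ! k) (xs ! Suc k))"
proof (induction rule: rtranclp_induct)
  case base
  then show ?case by (intro exI[of _ "[a]"]) auto
next
  case (step y z)
  then obtain xs where xs: "xs \<noteq> []" "hd xs = a" "last xs = y" "\<forall>k. Suc k < length xs \<longrightarrow> r (xs ! k) (xs ! Suc k)" by blast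
  have "\<forall>k. Suc k < length (xs @ [z]) \<longrightarrow> r ((xs @ [z]) ! k) ((xs @ [z]) ! Suc k)"
  proof (intro allI impI)
    fix k assume k: "Suc k < length (xs @ [z])"
    show "r ((xs @ [z]) ! k) ((xs @ [z]) ! Suc k)"
    proof (cases "Suc k < length xs")
      case True then show ?thesis using xs(4) by (simp add: nth_append)
    next
      case False
      then have "Suc k = length xs" using k by simp
      then have "xs ! k = y" using xs(1,3) by (metis diff_Suc_1 last_conv_nth)
      then show ?thesis using \<open>Suc k = length xs\<close> step.hyps(2) by (simp add: nth_append)
    qed
  qed
  then show ?case using xs by (intro exI[of _ "xs @ [z]"]) auto
qed

context inst begin

lemma yes_sound:
  assumes wf: "wf_protocol P" and bt: "\<beta> < length (edges P)" and y: "yesOK n t"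
  shows "can_arrive P \<beta> b p"
proof -
  define pa where "pa = nthc t 1"
  have L: "0 < lenc pa" using y by (simp add: yesOK_def pa_def)
  have R: "k < lenc pa \<Longrightarrow> reachable P (gdec (nthc pa k))" for k
  proof (induction k)
    case 0
    have "gdec (nthc pa 0) = initial_gstate P" using y initOK_sound by (simp add: yesOK_def pa_def)
    then show ?case by (simp add: reachable_def)
  next
    case (Suc k)
    have "stepOK n (nthc pa k) (nthc pa (Suc k))" using y Suc.prems by (simp add: yesOK_def pa_def)
    then have "step P (gdec (nthc pa k)) (gdec (nthc pa (Suc k)))" by (rule stepOK_sound)
    then show ?case using Suc unfolding reachable_def by (meson Suc_lessD rtranclp.rtrancl_into_rtrancl)
  qed
  define g where "g = nthc pa (lenc pa - 1)"
  have fin: "finalOK n g" using y L unfolding yesOK_def g_def pa_def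
    by (metis Suc_diff_1 diff_less zero_less_one)
  obtain SS CC where G: "gdec g = (SS, CC)" by fastforce
  have rg: "reachable P (SS, CC)" using R[of "lenc pa - 1"] L G g_def by simp
  note inv = reach_inv[OF rg]
  have hdlt: "hd_e P \<beta> < length (machines P)" using wf bt by (simp add: wf_protocol_def)
  have SS: "SS = list_decode (nthc g 0)" and CC: "CC = map list_decode (list_decode (nthc g 1))"
    using G by (auto simp: gdec_def)
  have "SS ! hd_e P \<beta> = p" using fin inv hdlt bt by (simp add: finalOK_def SS nthc_list)
  moreover have "\<exists>w. CC ! \<beta> = b # w"
  proof -
    have l: "\<beta> < length (list_decode (nthc g 1))" using inv bt CC by simp
    have "\<exists>w. list_decode (nthc (nthc g 1) \<beta>) = b # w"
      using fin by (intro lenc_pos_hd) (auto simp: finalOK_def)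
    then show ?thesis using l by (simp add: CC nthc_list)
  qed
  ultimately show ?thesis unfolding can_arrive_def using rg by blast
qed

lemma yes_complete:
  assumes bt: "\<beta> < length (edges P)" and wf: "wf_protocol P" and ca: "can_arrive P \<beta> b p"
  shows "\<exists>t. yesOK n t"
proof -
  obtain SS CC w where r: "reachable P (SS, CC)" and Sp: "SS ! hd_e P \<beta> = p" and Cb: "CC ! \<beta> = b # w"
    using ca unfolding can_arrive_def by blast
  obtain xs where xs: "xs \<noteq> []" "hd xs = initial_gstate P" "last xs = (SS, CC)"
     "\<forall>k. Suc k < length xs \<longrightarrow> step P (xs ! k) (xs ! Suc k)"
    using rtranclp_path[OF r[unfolded reachable_def]] by blast
  have R: "k < length xs \<Longrightarrow> reachable P (xs ! k)" for k
  proof (induction k)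
    case 0 then show ?case using xs by (simp add: reachable_def hd_conv_nth[symmetric])
  next
    case (Suc k) then show ?case using xs(4) unfolding reachable_def
      by (meson Suc_lessD rtranclp.rtrancl_into_rtrancl)
  qed
  define t where "t = list_encode [0, list_encode (map encg xs)]"
  have t0: "nthc t 0 = 0" and t1: "nthc t 1 = list_encode (map encg xs)" by (simp_all add: t_def)
  have inv: "length SS = length (machines P)" "length CC = length (edges P)" using reach_inv[OF r] by auto
  have hdlt: "hd_e P \<beta> < length (machines P)" using wf bt by (simp add: wf_protocol_def)
  have "yesOK n t"
    unfolding yesOK_def t0 t1
  proof (intro conjI allI impI)
    show "0 = (0::nat)" by simp
    show "0 < lenc (list_encode (map encg xs))" using xs by simp
    show "initOK n (nthc (list_encode (map encg xs)) 0)"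
      using xs initOK_complete by (simp add: hd_conv_nth)
    fix k
    assume "k < lenc (list_encode (map encg xs))" "Suc k < lenc (list_encode (map encg xs))"
    then show "stepOK n (nthc (list_encode (map encg xs)) k) (nthc (list_encode (map encg xs)) (Suc k))"
      using stepOK_complete[OF R xs(4)[rule_format]] by simp
  next
    fix k
    assume "k < lenc (list_encode (map encg xs))" "Suc k = lenc (list_encode (map encg xs))"
    then have k: "k = length xs - 1" "k < length xs" by auto
    then have "xs ! k = (SS, CC)" using xs by (simp add: last_conv_nth)
    then show "finalOK n (nthc (list_encode (map encg xs)) k)"
      using k inv hdlt bt Sp Cb by (simp add: finalOK_def)
  qed
  then show ?thesis by blast
qed

end


definition "KK t = nthc t 1"
definition "EE t = nthc t 2"
definition "TT t x y = nthc (nthc (nthc t 3) x) y"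
definition "PH t a = nthc (nthc t 4) a"
definition "GG t = nthc t 5"
definition "GS t g = nthc (nthc (GG t) g) 0"
definition "GM t g = nthc (nthc (GG t) g) 1"

definition "initM n t g \<longleftrightarrow> lenc (GS t g) = nMC n \<and> (\<forall>j<nMC n. nthc (GS t g) j = initC n j) \<and>
   lenc (GM t g) = nEC n \<and> (\<forall>x<nEC n. nthc (GM t g) x = EE t)"

definition "closM n t \<longleftrightarrow> (\<forall>g<lenc (GG t). \<forall>i<nMC n. \<forall>x<nEC n. \<forall>u<lenc (trC n i).
    nthc (GS t g) i = trf n i u 0 \<and> memC n x (trf n i u 2) \<longrightarrow>
     (trf n i u 1 = 1 \<and> tlC n x = i \<longrightarrow> (\<exists>g'<lenc (GG t). updC (GS t g) (GS t g') i (trf n i u 3) \<and>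
         updC (GM t g) (GM t g') x (TT t (nthc (GM t g) x) (PH t (trf n i u 2))))) \<and>
     (trf n i u 1 = 0 \<and> hdC n x = i \<longrightarrow> (\<forall>m0<KK t. TT t (PH t (trf n i u 2)) m0 = nthc (GM t g) x \<longrightarrow>
         (\<exists>g'<lenc (GG t). updC (GS t g) (GS t g') i (trf n i u 3) \<and> updC (GM t g) (GM t g') x m0))))"

definition "safeM n t \<longleftrightarrow> (\<forall>g<lenc (GG t). nthc (GS t g) (hdC n (betaC n)) = pC n \<longrightarrow>
   (\<forall>m0<KK t. TT t (PH t (bC n)) m0 \<noteq> nthc (GM t g) (betaC n)))"

definition "monM t \<longleftrightarrow> EE t < KK t \<and> (\<forall>x<KK t. \<forall>y<KK t. TT t x y < KK t) \<and>
  (\<forall>x<KK t. TT t (EE t) x = x \<and> TT t x (EE t) = x) \<and>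
  (\<forall>x<KK t. \<forall>y<KK t. \<forall>z<KK t. TT t (TT t x y) z = TT t x (TT t y z))"

definition "letM n t \<longleftrightarrow> (\<forall>x<nEC n. \<forall>j<lenc (msC n x). PH t (nthc (msC n x) j) < KK t)"

definition "noOK n t \<longleftrightarrow> nthc t 0 = 1 \<and> monM t \<and> letM n t \<and> (\<exists>g<lenc (GG t). initM n t g) \<and> closM n t \<and> safeM n t"

definition "phis t w = foldl (\<lambda>m a. TT t m (PH t a)) (EE t) w"

context inst begin

lemma letM_D: "letM n t \<Longrightarrow> x < length (edges P) \<Longrightarrow> a \<in> msgs P x \<Longrightarrow> PH t a < KK t"
  unfolding letM_def by (auto simp: msC msgs_def msl_def in_set_conv_nth)

lemma fold_lt: "monM t \<Longrightarrow> letM n t \<Longrightarrow> x < length (edges P) \<Longrightarrow> m < KK t \<Longrightarrow> set w \<subseteq> msgs P x \<Longrightarrow>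
   foldl (\<lambda>m a. TT t m (PH t a)) m w < KK t"
proof (induction w arbitrary: m)
  case (Cons a w)
  have "TT t m (PH t a) < KK t" using Cons.prems letM_D[of t x a] by (simp add: monM_def)
  then show ?case using Cons by simp
qed simp

lemma fold_assoc: "monM t \<Longrightarrow> letM n t \<Longrightarrow> x < length (edges P) \<Longrightarrow> m1 < KK t \<Longrightarrow> m2 < KK t \<Longrightarrow> set w \<subseteq> msgs P x \<Longrightarrow>
   foldl (\<lambda>m a. TT t m (PH t a)) (TT t m1 m2) w = TT t m1 (foldl (\<lambda>m a. TT t m (PH t a)) m2 w)"
proof (induction w arbitrary: m2)
  case (Cons a w)
  have pa: "PH t a < KK t" using Cons.prems letM_D[of t x a] by simp
  have "TT t (TT t m1 m2) (PH t a) = TT t m1 (TT t m2 (PH t a))" using Cons.prems pa by (simp add: monM_def)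
  moreover have "TT t m2 (PH t a) < KK t" using Cons.prems pa by (simp add: monM_def)
  ultimately show ?case using Cons by simp
qed simp

lemma phis_cons: "monM t \<Longrightarrow> letM n t \<Longrightarrow> x < length (edges P) \<Longrightarrow> set (a # w) \<subseteq> msgs P x \<Longrightarrow>
   phis t (a # w) = TT t (PH t a) (phis t w) \<and> phis t w < KK t"
proof -
  assume h: "monM t" "letM n t" "x < length (edges P)" "set (a # w) \<subseteq> msgs P x"
  have pa: "PH t a < KK t" using h letM_D[of t x a] by simp
  have e: "EE t < KK t" using h by (simp add: monM_def)
  have 1: "TT t (EE t) (PH t a) = PH t a" "TT t (PH t a) (EE t) = PH t a" using h pa by (auto simp: monM_def)
  have "phis t (a # w) = foldl (\<lambda>m a. TT t m (PH t a)) (TT t (PH t a) (EE t)) w"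
    by (simp add: phis_def 1)
  also have "\<dots> = TT t (PH t a) (phis t w)" unfolding phis_def using h pa e by (intro fold_assoc) auto
  finally show ?thesis using fold_lt[of t x "EE t" w] h e by (simp add: phis_def)
qed

lemma no_inv:
  assumes no: "noOK n t" and r: "reachable P (SS, CC)"
  shows "\<exists>g<lenc (GG t). list_decode (GS t g) = SS \<and> list_decode (GM t g) = map (phis t) CC"
proof -
  have "(step P)\<^sup>*\<^sup>* (initial_gstate P) G \<Longrightarrow> \<exists>g<lenc (GG t). list_decode (GS t g) = fst G \<and> list_decode (GM t g) = map (phis t) (snd G)" for G
  proof (induction rule: rtranclp_induct)
    case base
    from no obtain g where g: "g < lenc (GG t)" "initM n t g" by (auto simp: noOK_def)
    have 1: "list_decode (GS t g) = map (init P) [0..<length (machines P)]"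
      apply (rule nth_equalityI) using g by (auto simp: initM_def lenc_def nthc_list)
    have 2: "list_decode (GM t g) = map (phis t) (replicate (length (edges P)) [])"
      apply (rule nth_equalityI) using g by (auto simp: initM_def lenc_def nthc_list phis_def)
    show ?case using g 1 2 by (auto simp: initial_gstate_def)
  next
    case (step y z)
    have ry: "reachable P y" using step.hyps(1) by (simp add: reachable_def)
    from step.IH obtain g where g: "g < lenc (GG t)" "list_decode (GS t g) = fst y" "list_decode (GM t g) = map (phis t) (snd y)" by blast
    have mon: "monM t" and lm: "letM n t" and cl: "closM n t" using no by (auto simp: noOK_def)
    from step.hyps(2) show ?case
    proof (cases rule: step.cases)
      case (send i x b' S0 q C0)
      note inv = reach_inv[of P S0 C0, OF ry[unfolded send(1)]]
      obtain u where u: "u < length (trl P i)" "trl P i ! u = (S0 ! i, True, b', q)"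
        using trans_ex[OF send(7)] by blast
      have gs: "nthc (GS t g) i = S0 ! i" using g send inv by (simp add: nthc_list lenc_def)
      have gm: "nthc (GM t g) x = phis t (C0 ! x)" using g send inv by (simp add: nthc_list lenc_def)
      have "\<exists>g'<lenc (GG t). updC (GS t g) (GS t g') i q \<and> updC (GM t g) (GM t g') x (TT t (nthc (GM t g) x) (PH t b'))"
        using cl g(1) send u gs unfolding closM_def by fastforce
      then obtain g' where g': "g' < lenc (GG t)" "list_decode (GS t g') = S0[i := q]"
        "list_decode (GM t g') = (map (phis t) C0)[x := TT t (phis t (C0 ! x)) (PH t b')]"
        using g send gm by (auto simp: updC_iff)
      have "phis t (C0 ! x @ [b']) = TT t (phis t (C0 ! x)) (PH t b')" by (simp add: phis_def)
      then show ?thesis using g' send by (auto intro!: exI[of _ g'] simp: map_update)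
    next
      case (recv i x b' S0 q C0 w)
      note inv = reach_inv[of P S0 C0, OF ry[unfolded recv(1)]]
      obtain u where u: "u < length (trl P i)" "trl P i ! u = (S0 ! i, False, b', q)"
        using trans_ex[OF recv(7)] by blast
      have gs: "nthc (GS t g) i = S0 ! i" using g recv inv by (simp add: nthc_list lenc_def)
      have gm: "nthc (GM t g) x = phis t (C0 ! x)" using g recv inv by (simp add: nthc_list lenc_def)
      have lett: "set (b' # w) \<subseteq> msgs P x" using inv recv by metis
      have pc: "phis t (b' # w) = TT t (PH t b') (phis t w)" "phis t w < KK t"
        using phis_cons[OF mon lm _ lett] recv by auto
      have "\<exists>g'<lenc (GG t). updC (GS t g) (GS t g') i q \<and> updC (GM t g) (GM t g') x (phis t w)"
        using cl g(1) recv u gs gm pc unfolding closM_def by fastforce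
      then obtain g' where g': "g' < lenc (GG t)" "list_decode (GS t g') = S0[i := q]"
        "list_decode (GM t g') = (map (phis t) C0)[x := phis t w]"
        using g recv by (auto simp: updC_iff)
      then show ?thesis using recv by (auto intro!: exI[of _ g'] simp: map_update)
    qed
  qed
  then show ?thesis using r unfolding reachable_def by fastforce
qed

lemma no_sound:
  assumes wf: "wf_protocol P" and bt: "\<beta> < length (edges P)" and no: "noOK n t"
  shows "\<not> can_arrive P \<beta> b p"
proof
  assume "can_arrive P \<beta> b p"
  then obtain SS CC w where r: "reachable P (SS, CC)" and Sp: "SS ! hd_e P \<beta> = p" and Cb: "CC ! \<beta> = b # w"
    unfolding can_arrive_def by blast
  note inv = reach_inv[OF r]
  obtain g where g: "g < lenc (GG t)" "list_decode (GS t g) = SS" "list_decode (GM t g) = map (phis t) CC"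
    using no_inv[OF no r] by blast
  have hdlt: "hd_e P \<beta> < length (machines P)" using wf bt by (simp add: wf_protocol_def)
  have mon: "monM t" and lm: "letM n t" and sf: "safeM n t" using no by (auto simp: noOK_def)
  have gs: "nthc (GS t g) (hd_e P \<beta>) = p" using g inv hdlt Sp by (simp add: nthc_list lenc_def)
  have gm: "nthc (GM t g) \<beta> = phis t (b # w)" using g inv bt Cb by (simp add: nthc_list lenc_def)
  have lett: "set (b # w) \<subseteq> msgs P \<beta>" using inv bt Cb by metis
  have pc: "phis t (b # w) = TT t (PH t b) (phis t w)" "phis t w < KK t"
    using phis_cons[OF mon lm bt lett] by auto
  show False using sf g(1) gs gm pc bt unfolding safeM_def by force
qed

end


locale nocert = inst +
  assumes wf: "wf_protocol P" and bt: "\<beta> < length (edges P)"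
    and rcp: "recognizable_channel_property P" and ncan: "\<not> can_arrive P \<beta> b p"
begin

definition "UU = (\<Union>j<length (machines P). states P j)"
definition "Sset = {SS. set SS \<subseteq> UU \<and> length SS = length (machines P)}"

definition "FFprop FF \<longleftrightarrow> (\<forall>SS. (\<forall>Ls\<in>set (FF SS). length Ls = length (edges P) \<and>
           (\<forall>x<length (edges P). regular (Ls ! x) \<and> Ls ! x \<subseteq> lists (msgs P x))) \<and>
        {CC. reachable P (SS, CC)} =
          (\<Union>Ls \<in> set (FF SS). {CC. length CC = length (edges P) \<and> (\<forall>x<length (edges P). CC ! x \<in> Ls ! x)}))"
definition "FF = (SOME FF. FFprop FF)"

lemma FF: "FFprop FF"
proof -
  have "\<exists>FF. FFprop FF" using rcp unfolding recognizable_channel_property_def FFprop_def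
    by (rule choice)
  then show ?thesis unfolding FF_def by (rule someI_ex)
qed

lemma finite_Sset: "finite Sset"
proof -
  have "finite UU" unfolding UU_def states_def by auto
  then show ?thesis unfolding Sset_def by (rule finite_lists_length_eq)
qed

lemma reach_Sset: "reachable P (SS, CC) \<Longrightarrow> SS \<in> Sset"
  using reach_inv[of P SS CC] reach_states[OF wf, of SS CC]
  unfolding Sset_def UU_def by (auto simp: in_set_conv_nth) blast

definition "Fam = (\<Union>SS\<in>Sset. \<Union>Ls\<in>set (FF SS). (\<lambda>x. Ls ! x) ` {..<length (edges P)})"

lemma finite_Fam: "finite Fam"
  unfolding Fam_def by (intro finite_UN_I finite_Sset finite_set finite_imageI finite_lessThan)

lemma regular_Fam: "L \<in> Fam \<Longrightarrow> regular L"
proof -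
  assume "L \<in> Fam"
  then obtain SS Ls x where h: "Ls \<in> set (FF SS)" "x < length (edges P)" "L = Ls ! x"
    unfolding Fam_def by blast
  have "\<forall>Ls\<in>set (FF SS). length Ls = length (edges P) \<and>
           (\<forall>x<length (edges P). regular (Ls ! x) \<and> Ls ! x \<subseteq> lists (msgs P x))"
    using FF[unfolded FFprop_def, rule_format, of SS] by (rule conjunct1)
  then show ?thesis using h by blast
qed

definition "FL = (SOME l. set l = Fam)"
lemma set_FL: "set FL = Fam"
  unfolding FL_def using finite_list[OF finite_Fam] by (rule someI_ex)

definition "cls u = map (\<lambda>L. ctx L u) FL"

lemma finite_cls: "finite (range cls)"
proof -
  have f: "finite (\<Union>L\<in>Fam. range (ctx L))" using finite_Fam regular_Fam finite_ctx by blast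
  have "range cls \<subseteq> {xs. set xs \<subseteq> (\<Union>L\<in>Fam. range (ctx L)) \<and> length xs = length FL}"
  proof
    fix c assume "c \<in> range cls"
    then obtain u where c: "c = cls u" by blast
    have "set c \<subseteq> (\<Union>L\<in>Fam. range (ctx L))"
    proof
      fix z assume "z \<in> set c"
      then obtain L where "L \<in> set FL" "z = ctx L u" unfolding c cls_def by auto
      then show "z \<in> (\<Union>L\<in>Fam. range (ctx L))" using set_FL by blast
    qed
    then show "c \<in> {xs. set xs \<subseteq> (\<Union>L\<in>Fam. range (ctx L)) \<and> length xs = length FL}"
      unfolding c cls_def by simp
  qed
  then show ?thesis using finite_lists_length_eq[OF f] finite_subset by blast
qed

definition "kk = card (range cls)"
definition "hh = (SOME h. bij_betw h {0..<kk} (range cls))"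
lemma hh: "bij_betw hh {0..<kk} (range cls)"
  unfolding hh_def kk_def using ex_bij_betw_nat_finite[OF finite_cls] by (rule someI_ex)

definition "cl u = inv_into {0..<kk} hh (cls u)"

lemma cl_lt: "cl u < kk"
proof -
  have "cls u \<in> hh ` {0..<kk}" using hh by (simp add: bij_betw_def)
  then have "inv_into {0..<kk} hh (cls u) \<in> {0..<kk}" by (rule inv_into_into)
  then show ?thesis unfolding cl_def by simp
qed

lemma hh_cl: "hh (cl u) = cls u"
proof -
  have "cls u \<in> hh ` {0..<kk}" using hh by (simp add: bij_betw_def)
  then show ?thesis unfolding cl_def by (rule f_inv_into_f)
qed

lemma cl_eq: "cl u = cl v \<longleftrightarrow> cls u = cls v"
proof
  assume "cl u = cl v"
  then have "hh (cl u) = hh (cl v)" by simp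
  then show "cls u = cls v" by (simp add: hh_cl)
next
  assume "cls u = cls v"
  then show "cl u = cl v" unfolding cl_def by simp
qed

definition "rep m = (SOME u. cls u = hh m)"

lemma cls_rep: "m < kk \<Longrightarrow> cls (rep m) = hh m"
proof -
  assume "m < kk"
  then have "hh m \<in> range cls" using hh by (auto simp: bij_betw_def)
  then have "\<exists>u. cls u = hh m" by auto
  then show ?thesis unfolding rep_def by (rule someI_ex)
qed

lemma cl_rep: "m < kk \<Longrightarrow> cl (rep m) = m"
  unfolding cl_def using cls_rep hh by (simp add: bij_betw_def)

lemma ctx_app1: "ctx L (u @ v) = {(x, y). (x, v @ y) \<in> ctx L u}" by (simp add: ctx_def)
lemma ctx_app2: "ctx L (u @ v) = {(x, y). (x @ u, y) \<in> ctx L v}" by (simp add: ctx_def)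

lemma cls_cong: "cls u = cls u' \<Longrightarrow> cls v = cls v' \<Longrightarrow> cls (u @ v) = cls (u' @ v')"
proof -
  assume a: "cls u = cls u'" and c: "cls v = cls v'"
  have "\<forall>L\<in>set FL. ctx L u = ctx L u'" "\<forall>L\<in>set FL. ctx L v = ctx L v'"
    using a c unfolding cls_def by (auto simp: map_eq_conv)
  then have "\<forall>L\<in>set FL. ctx L (u @ v) = ctx L (u' @ v')"
  proof (intro ballI)
    fix L assume "L \<in> set FL"
    then have 1: "ctx L u = ctx L u'" and 2: "ctx L v = ctx L v'" using a c unfolding cls_def by (auto simp: map_eq_conv)
    have "ctx L (u @ v) = ctx L (u' @ v)" unfolding ctx_app1[of L u v] ctx_app1[of L u' v] 1 ..
    also have "\<dots> = ctx L (u' @ v')" unfolding ctx_app2[of L u' v] ctx_app2[of L u' v'] 2 ..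
    finally show "ctx L (u @ v) = ctx L (u' @ v')" .
  qed
  then show ?thesis unfolding cls_def by simp
qed

definition "Tm x y = cl (rep x @ rep y)"

lemma cls_rep_cl: "cls (rep (cl u)) = cls u"
  using cls_rep[OF cl_lt] hh_cl by simp

lemma Tm_cl: "Tm (cl u) (cl v) = cl (u @ v)"
  unfolding Tm_def cl_eq using cls_cong[OF cls_rep_cl cls_rep_cl] .

lemma fold_cl: "foldl (\<lambda>m a. Tm m (cl [a])) (cl u) w = cl (u @ w)"
  by (induction w arbitrary: u) (auto simp: Tm_cl)

lemma saturate:
  assumes r: "reachable P (SS, CC)" and l: "length CC' = length CC"
    and e: "\<forall>x<length CC. cl (CC' ! x) = cl (CC ! x)"
  shows "reachable P (SS, CC')"
proof -
  have SS: "SS \<in> Sset" using reach_Sset[OF r] .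
  have FS: "{C. reachable P (SS, C)} =
          (\<Union>Ls \<in> set (FF SS). {C. length C = length (edges P) \<and> (\<forall>x<length (edges P). C ! x \<in> Ls ! x)})"
    using FF[unfolded FFprop_def, rule_format, of SS] by (rule conjunct2)
  have "CC \<in> {C. reachable P (SS, C)}" using r by simp
  then have "CC \<in> (\<Union>Ls \<in> set (FF SS). {C. length C = length (edges P) \<and> (\<forall>x<length (edges P). C ! x \<in> Ls ! x)})"
    unfolding FS .
  then obtain Ls where Ls: "Ls \<in> set (FF SS)" "length CC = length (edges P)" "\<forall>x<length (edges P). CC ! x \<in> Ls ! x"
    by (auto simp only: UN_iff mem_Collect_eq)
  have "\<forall>x<length (edges P). CC' ! x \<in> Ls ! x"
  proof (intro allI impI)
    fix x assume x: "x < length (edges P)"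
    have LF: "Ls ! x \<in> set FL" unfolding set_FL Fam_def using SS Ls(1) x by blast
    have "cls (CC' ! x) = cls (CC ! x)" using e x Ls(2) cl_eq by auto
    then have "ctx (Ls ! x) (CC' ! x) = ctx (Ls ! x) (CC ! x)" using LF unfolding cls_def by (auto simp: map_eq_conv)
    moreover have "([], []) \<in> ctx (Ls ! x) (CC ! x)" using Ls x by (simp add: ctx_def)
    ultimately have "([], []) \<in> ctx (Ls ! x) (CC' ! x)" by simp
    then show "CC' ! x \<in> Ls ! x" by (simp add: ctx_def)
  qed
  then have "CC' \<in> (\<Union>Ls \<in> set (FF SS). {C. length C = length (edges P) \<and> (\<forall>x<length (edges P). C ! x \<in> Ls ! x)})"
    using Ls l by (intro UN_I[OF Ls(1)]) simp
  then have "CC' \<in> {C. reachable P (SS, C)}" unfolding FS .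
  then show ?thesis by simp
qed

end


declare list_encode.simps[simp del]

locale nocert2 = nocert +
  assumes bm: "b \<in> msgs P \<beta>"
begin

definition "AA = (\<Union>x<length (edges P). msgs P x)"
definition "Bd = (SOME B. \<forall>a\<in>AA. a < B)"

lemma Bd: "x < length (edges P) \<Longrightarrow> a \<in> msgs P x \<Longrightarrow> a < Bd"
proof -
  assume h: "x < length (edges P)" "a \<in> msgs P x"
  have "finite AA" unfolding AA_def msgs_def by auto
  then have "\<exists>B. \<forall>a\<in>AA. a < B" by (simp add: finite_nat_set_iff_bounded)
  then have "\<forall>a\<in>AA. a < Bd" unfolding Bd_def by (rule someI_ex)
  moreover have "a \<in> AA" unfolding AA_def using h by blast
  ultimately show ?thesis by blast
qed

definition "GSet = {(SS, map cl CC) | SS CC. reachable P (SS, CC)}"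

lemma finite_GSet: "finite GSet"
proof -
  have "GSet \<subseteq> Sset \<times> {m. set m \<subseteq> {0..<kk} \<and> length m = length (edges P)}"
  proof
    fix G assume "G \<in> GSet"
    then obtain SS CC where G: "G = (SS, map cl CC)" and r: "reachable P (SS, CC)" unfolding GSet_def by blast
    have "SS \<in> Sset" using reach_Sset[OF r] .
    moreover have "set (map cl CC) \<subseteq> {0..<kk}" using cl_lt by auto
    moreover have "length (map cl CC) = length (edges P)" using reach_inv[OF r] by simp
    ultimately show "G \<in> Sset \<times> {m. set m \<subseteq> {0..<kk} \<and> length m = length (edges P)}" using G by simp
  qed
  moreover have "finite (Sset \<times> {m. set m \<subseteq> {0..<kk} \<and> length m = length (edges P)})"
    using finite_Sset finite_lists_length_eq[of "{0..<kk}"] by simp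
  ultimately show ?thesis using finite_subset by blast
qed

definition "Gl = (SOME l. set l = GSet)"
lemma set_Gl: "set Gl = GSet"
  unfolding Gl_def using finite_list[OF finite_GSet] by (rule someI_ex)

lemma Gl_nth: "g < length Gl \<Longrightarrow> \<exists>SS CC. Gl ! g = (SS, map cl CC) \<and> reachable P (SS, CC)"
  using nth_mem[of g Gl] set_Gl unfolding GSet_def by auto

lemma Gl_in: "reachable P (SS, CC) \<Longrightarrow> \<exists>g<length Gl. Gl ! g = (SS, map cl CC)"
proof -
  assume "reachable P (SS, CC)"
  then have "(SS, map cl CC) \<in> set Gl" unfolding set_Gl GSet_def by blast
  then show ?thesis by (simp add: in_set_conv_nth)
qed

definition "Tc = list_encode (map (\<lambda>x. list_encode (map (Tm x) [0..<kk])) [0..<kk])"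
definition "PHc = list_encode (map (\<lambda>a. cl [a]) [0..<Bd])"
definition "Gc = list_encode (map (\<lambda>G. list_encode [list_encode (fst G), list_encode (snd G)]) Gl)"
definition "tt = list_encode [1, kk, cl [], Tc, PHc, Gc]"

lemma tt0: "nthc tt 0 = 1" by (simp add: tt_def)
lemma KKtt[simp]: "KK tt = kk" by (simp add: tt_def KK_def)
lemma EEtt[simp]: "EE tt = cl []" by (simp add: tt_def EE_def)
lemma TTtt[simp]: "x < kk \<Longrightarrow> y < kk \<Longrightarrow> TT tt x y = Tm x y" by (simp add: tt_def TT_def Tc_def)
lemma PHtt[simp]: "a < Bd \<Longrightarrow> PH tt a = cl [a]" by (simp add: tt_def PH_def PHc_def)
lemma GGtt[simp]: "lenc (GG tt) = length Gl" by (simp add: tt_def GG_def Gc_def)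
lemma GStt[simp]: "g < length Gl \<Longrightarrow> GS tt g = list_encode (fst (Gl ! g))" by (simp add: tt_def GS_def GG_def Gc_def)
lemma GMtt[simp]: "g < length Gl \<Longrightarrow> GM tt g = list_encode (snd (Gl ! g))" by (simp add: tt_def GM_def GG_def Gc_def)

lemma Tm_lt: "Tm x y < kk" unfolding Tm_def by (rule cl_lt)

lemma monM: "monM tt"
proof -
  have e: "x < kk \<Longrightarrow> Tm (cl []) x = x \<and> Tm x (cl []) = x" for x
    using Tm_cl[of "[]" "rep x"] Tm_cl[of "rep x" "[]"] cl_rep[of x] by simp
  have a: "x < kk \<Longrightarrow> y < kk \<Longrightarrow> z < kk \<Longrightarrow> Tm (Tm x y) z = Tm x (Tm y z)" for x y z
    using Tm_cl[of "rep x" "rep y"] Tm_cl[of "rep y" "rep z"] Tm_cl[of "rep x @ rep y" "rep z"]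
      Tm_cl[of "rep x" "rep y @ rep z"] cl_rep[of x] cl_rep[of y] cl_rep[of z] by simp
  show ?thesis unfolding monM_def using e a cl_lt Tm_lt by simp
qed

lemma letM: "letM n tt"
  unfolding letM_def
proof (intro allI impI)
  fix x j assume x: "x < nEC n" and j: "j < lenc (msC n x)"
  have x': "x < length (edges P)" using x by simp
  have "nthc (msC n x) j \<in> msgs P x" using j x' by (simp add: msC msgs_def msl_def)
  then have "nthc (msC n x) j < Bd" using Bd x' by blast
  then show "PH tt (nthc (msC n x) j) < KK tt" using cl_lt by simp
qed

lemma initM: "\<exists>g<lenc (GG tt). initM n tt g"
proof -
  have "reachable P (initial_gstate P)" by (simp add: reachable_def)
  then obtain g where g: "g < length Gl" "Gl ! g = (map (init P) [0..<length (machines P)], map cl (replicate (length (edges P)) []))"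
    using Gl_in unfolding initial_gstate_def by blast
  have "initM n tt g" using g by (simp add: initM_def)
  then show ?thesis using g by auto
qed

lemma br_send:
  assumes g: "g < lenc (GG tt)" and i: "i < nMC n" and x: "x < nEC n" and u: "u < lenc (trC n i)"
    and a1: "nthc (GS tt g) i = trf n i u 0" and a2: "memC n x (trf n i u 2)"
    and a3: "trf n i u 1 = 1" and a4: "tlC n x = i"
  shows "\<exists>g'<lenc (GG tt). updC (GS tt g) (GS tt g') i (trf n i u 3) \<and>
         updC (GM tt g) (GM tt g') x (TT tt (nthc (GM tt g) x) (PH tt (trf n i u 2)))"
proof -
  have i': "i < length (machines P)" and x': "x < length (edges P)" and u': "u < length (trl P i)"
    and g': "g < length Gl" using i x u g by (auto simp: i)
  obtain SS CC where G: "Gl ! g = (SS, map cl CC)" and r: "reachable P (SS, CC)" using Gl_nth[OF g'] by blast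
  note inv = reach_inv[OF r]
  obtain p' s b' q where tr: "trl P i ! u = (p', s, b', q)" by (metis prod_cases4)
  have trin: "(p', s, b', q) \<in> trans P i" using u' tr by (metis nth_mem trans_nth)
  have Si: "SS ! i = p'" using a1 i' u' tr G g' inv by simp
  have bm': "b' \<in> msgs P x" using a2 x' i' u' tr by simp
  have s: "s" using a3 i' u' tr by (simp split: if_splits)
  have tl: "tl_e P x = i" using a4 x' by simp
  have "step P (SS, CC) (SS[i := q], CC[x := CC ! x @ [b']])"
    using i' x' bm' tl trin Si s by (intro step.send) auto
  then have "reachable P (SS[i := q], CC[x := CC ! x @ [b']])" using r unfolding reachable_def by simp
  then obtain g2 where g2: "g2 < length Gl" "Gl ! g2 = (SS[i := q], map cl (CC[x := CC ! x @ [b']]))"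
    using Gl_in by blast
  have bB: "b' < Bd" using Bd x' bm' by blast
  have "TT tt (nthc (GM tt g) x) (PH tt (trf n i u 2)) = cl (CC ! x @ [b'])"
    using g' G inv x' i' u' tr bB cl_lt by (simp add: Tm_cl)
  moreover have "updC (GS tt g) (GS tt g2) i (trf n i u 3)" using g' g2 G i' u' tr by (simp add: updC_iff)
  moreover have "updC (GM tt g) (GM tt g2) x (cl (CC ! x @ [b']))" using g' g2 G by (simp add: updC_iff map_update)
  ultimately show ?thesis using g2 by auto
qed

lemma br_recv:
  assumes g: "g < lenc (GG tt)" and i: "i < nMC n" and x: "x < nEC n" and u: "u < lenc (trC n i)"
    and a1: "nthc (GS tt g) i = trf n i u 0" and a2: "memC n x (trf n i u 2)"
    and a3: "trf n i u 1 = 0" and a4: "hdC n x = i"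
    and m0: "m0 < KK tt" and a5: "TT tt (PH tt (trf n i u 2)) m0 = nthc (GM tt g) x"
  shows "\<exists>g'<lenc (GG tt). updC (GS tt g) (GS tt g') i (trf n i u 3) \<and> updC (GM tt g) (GM tt g') x m0"
proof -
  have i': "i < length (machines P)" and x': "x < length (edges P)" and u': "u < length (trl P i)"
    and g': "g < length Gl" using i x u g by (auto simp: i)
  obtain SS CC where G: "Gl ! g = (SS, map cl CC)" and r: "reachable P (SS, CC)" using Gl_nth[OF g'] by blast
  note inv = reach_inv[OF r]
  obtain p' s b' q where tr: "trl P i ! u = (p', s, b', q)" by (metis prod_cases4)
  have trin: "(p', s, b', q) \<in> trans P i" using u' tr by (metis nth_mem trans_nth)
  have Si: "SS ! i = p'" using a1 i' u' tr G g' inv by simp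
  have bm': "b' \<in> msgs P x" using a2 x' i' u' tr by simp
  have s: "\<not> s" using a3 i' u' tr by (simp split: if_splits)
  have hd: "hd_e P x = i" using a4 x' by simp
  have bB: "b' < Bd" using Bd x' bm' by blast
  have m0': "m0 < kk" using m0 by simp
  define w0 where "w0 = rep m0"
  have clw: "cl w0 = m0" using cl_rep[OF m0'] w0_def by simp
  have "cl (b' # w0) = Tm (cl [b']) (cl w0)" using Tm_cl[of "[b']" w0] by simp
  also have "\<dots> = cl (CC ! x)" using a5 clw g' G inv x' i' u' tr bB cl_lt m0' by simp
  finally have ce: "cl (b' # w0) = cl (CC ! x)" .
  have r2: "reachable P (SS, CC[x := b' # w0])"
    by (rule saturate[OF r]) (use inv x' ce in \<open>auto simp: nth_list_update\<close>)
  have "step P (SS, CC[x := b' # w0]) (SS[i := q], (CC[x := b' # w0])[x := w0])"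
    using i' x' bm' hd trin Si s inv by (intro step.recv) auto
  then have "reachable P (SS[i := q], CC[x := w0])" using r2 unfolding reachable_def by simp
  then obtain g2 where g2: "g2 < length Gl" "Gl ! g2 = (SS[i := q], map cl (CC[x := w0]))"
    using Gl_in by blast
  have "updC (GS tt g) (GS tt g2) i (trf n i u 3)" using g' g2 G i' u' tr by (simp add: updC_iff)
  moreover have "updC (GM tt g) (GM tt g2) x m0" using g' g2 G clw by (simp add: updC_iff map_update)
  ultimately show ?thesis using g2 by auto
qed

lemma closM: "closM n tt"
  unfolding closM_def using br_send br_recv by blast

lemma safeM: "safeM n tt"
  unfolding safeM_def
proof (intro allI impI)
  fix g m0 assume g: "g < lenc (GG tt)" and gp: "nthc (GS tt g) (hdC n (betaC n)) = pC n" and m0: "m0 < KK tt"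
  show "TT tt (PH tt (bC n)) m0 \<noteq> nthc (GM tt g) (betaC n)"
  proof
    assume a5: "TT tt (PH tt (bC n)) m0 = nthc (GM tt g) (betaC n)"
    have g': "g < length Gl" using g by simp
    obtain SS CC where G: "Gl ! g = (SS, map cl CC)" and r: "reachable P (SS, CC)" using Gl_nth[OF g'] by blast
    note inv = reach_inv[OF r]
    have hdlt: "hd_e P \<beta> < length (machines P)" using wf bt by (simp add: wf_protocol_def)
    have Sp: "SS ! hd_e P \<beta> = p" using gp g' G inv hdlt bt by simp
    have bB: "b < Bd" using Bd bt bm by blast
    have m0': "m0 < kk" using m0 by simp
    define w0 where "w0 = rep m0"
    have clw: "cl w0 = m0" using cl_rep[OF m0'] w0_def by simp
    have "cl (b # w0) = Tm (cl [b]) (cl w0)" using Tm_cl[of "[b]" w0] by simp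
    also have "\<dots> = cl (CC ! \<beta>)" using a5 clw g' G inv bt bB cl_lt m0' by simp
    finally have ce: "cl (b # w0) = cl (CC ! \<beta>)" .
    have r2: "reachable P (SS, CC[\<beta> := b # w0])"
      by (rule saturate[OF r]) (use inv bt ce in \<open>auto simp: nth_list_update\<close>)
    have "can_arrive P \<beta> b p" unfolding can_arrive_def
      apply (rule exI[of _ SS], rule exI[of _ "CC[\<beta> := b # w0]"])
      using r2 Sp inv bt by auto
    then show False using ncan by simp
  qed
qed

lemma noOK: "noOK n tt"
  unfolding noOK_def using tt0 monM letM initM closM safeM by simp

end


declare list_encode.simps[simp del]

abbreviation up :: "ex \<Rightarrow> ex" where "up e \<equiv> sh 0 1 e"

lemma ev_V0[simp]: "ev (V 0) (a # xs) = a" by simp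
lemma ev_V1[simp]: "ev (V 1) (a # b # xs) = b" by simp
lemma ev_V2[simp]: "ev (V 2) (a # b # c # xs) = c" by (simp add: numeral_2_eq_2)
lemma ev_V1'[simp]: "ev (V (Suc 0)) (a # b # xs) = b" by simp

definition evb :: "ex \<Rightarrow> nat list \<Rightarrow> bool" where "evb e xs \<longleftrightarrow> ev e xs \<noteq> 0"

definition "iteE p a b = ifzE p b a"

lemma evb_simps:
  "evb (andE a b) xs \<longleftrightarrow> evb a xs \<and> evb b xs"
  "evb (orE a b) xs \<longleftrightarrow> evb a xs \<or> evb b xs"
  "evb (notE a) xs \<longleftrightarrow> \<not> evb a xs"
  "evb (impE a b) xs \<longleftrightarrow> (evb a xs \<longrightarrow> evb b xs)"
  "evb (eqE a b) xs \<longleftrightarrow> ev a xs = ev b xs"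
  "evb (ltE a b) xs \<longleftrightarrow> ev a xs < ev b xs"
  "evb (ballE bnd q) xs \<longleftrightarrow> (\<forall>i<ev bnd xs. evb q (i # xs))"
  "evb (bexE bnd q) xs \<longleftrightarrow> (\<exists>i<ev bnd xs. evb q (i # xs))"
  by (simp_all add: evb_def)

lemma ev_iteE: "ev (iteE q a b) xs = (if evb q xs then ev a xs else ev b xs)"
  by (simp add: iteE_def evb_def)

definition "c0 = Cst 0"
definition "c1 = Cst 1"
definition "c2 = Cst 2"
definition "c3 = Cst 3"
lemma ev_c[simp]: "ev c0 xs = 0" "ev c1 xs = 1" "ev c2 xs = 2" "ev c3 xs = 3"
  by (simp_all add: c0_def c1_def c2_def c3_def)

definition "prCE n = nthE n c0"
definition "ECE n = nthE (prCE n) c0"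
definition "MCE n = nthE (prCE n) c1"
definition "nECE n = lenE (ECE n)"
definition "nMCE n = lenE (MCE n)"
definition "betaCE n = nthE n c1"
definition "bCE n = nthE n c2"
definition "pCE n = nthE n c3"
definition "tlCE n x = nthE (nthE (ECE n) x) c0"
definition "hdCE n x = nthE (nthE (ECE n) x) c1"
definition "msCE n x = nthE (nthE (ECE n) x) c2"
definition "initCE n j = nthE (nthE (MCE n) j) c1"
definition "trCE n j = nthE (nthE (MCE n) j) c2"
definition "trfE n j u f = nthE (nthE (trCE n j) u) f"

lemma ev_basic[simp]:
  "ev (prCE n) xs = prC (ev n xs)"
  "ev (ECE n) xs = EC (ev n xs)"
  "ev (MCE n) xs = MC (ev n xs)"
  "ev (nECE n) xs = nEC (ev n xs)"
  "ev (nMCE n) xs = nMC (ev n xs)"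
  "ev (betaCE n) xs = betaC (ev n xs)"
  "ev (bCE n) xs = bC (ev n xs)"
  "ev (pCE n) xs = pC (ev n xs)"
  "ev (tlCE n x) xs = tlC (ev n xs) (ev x xs)"
  "ev (hdCE n x) xs = hdC (ev n xs) (ev x xs)"
  "ev (msCE n x) xs = msC (ev n xs) (ev x xs)"
  "ev (initCE n x) xs = initC (ev n xs) (ev x xs)"
  "ev (trCE n x) xs = trC (ev n xs) (ev x xs)"
  "ev (trfE n j u f) xs = trf (ev n xs) (ev j xs) (ev u xs) (ev f xs)"
  by (simp_all add: prCE_def prC_def ECE_def EC_def MCE_def MC_def nECE_def nEC_def nMCE_def nMC_def
     betaCE_def betaC_def bCE_def bC_def pCE_def pC_def tlCE_def tlC_def hdCE_def hdC_def msCE_def msC_def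
     initCE_def initC_def trCE_def trC_def trfE_def trf_def)


lemma ev_V3[simp]: "ev (V 3) (a # b # c # d # xs) = d" by (simp add: eval_nat_numeral)
lemma ev_V4[simp]: "ev (V 4) (a # b # c # d # e # xs) = e" by (simp add: eval_nat_numeral)
lemma ev_V5[simp]: "ev (V 5) (a # b # c # d # e # f # xs) = f" by (simp add: eval_nat_numeral)
definition "c4 = Cst 4"
definition "c5 = Cst 5"
lemma ev_c45[simp]: "ev c4 xs = 4" "ev c5 xs = 5" by (simp_all add: c4_def c5_def)

lemmas evs = evb_simps ev_V3 ev_V4 ev_V5 ev_c45 ev_iteE ev_basic ev_sh01 ev_V0 ev_V1 ev_V2 ev_c ev_nthE ev_lenE ev_peE ev.simps(3)

definition "memCE n x a = bexE (lenE (msCE n x)) (eqE (nthE (msCE (up n) (up x)) (V 0)) (up a))"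
lemma evb_memCE[simp]: "evb (memCE n x a) xs = memC (ev n xs) (ev x xs) (ev a xs)"
  unfolding memCE_def memC_def by (simp only: evs)

definition "updCE s s' i v = andE (eqE (lenE s') (lenE s))
   (ballE (lenE s) (eqE (nthE (up s') (V 0)) (iteE (eqE (V 0) (up i)) (up v) (nthE (up s) (V 0)))))"
lemma evb_updCE[simp]: "evb (updCE s s' i v) xs = updC (ev s xs) (ev s' xs) (ev i xs) (ev v xs)"
  unfolding updCE_def updC_def by (simp only: evs)

definition "appCE x y a = andE (eqE (lenE y) (S (lenE x)))
   (andE (ballE (lenE x) (eqE (nthE (up y) (V 0)) (nthE (up x) (V 0)))) (eqE (nthE y (lenE x)) a))"
lemma evb_appCE[simp]: "evb (appCE x y a) xs = appC (ev x xs) (ev y xs) (ev a xs)"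
  unfolding appCE_def appC_def by (simp only: evs)

lemmas evs2 = evs evb_memCE evb_updCE evb_appCE

definition "initOKE n g = andE (eqE (lenE (nthE g c0)) (nMCE n))
  (andE (ballE (nMCE n) (eqE (nthE (nthE (up g) c0) (V 0)) (initCE (up n) (V 0))))
   (andE (eqE (lenE (nthE g c1)) (nECE n))
     (ballE (nECE n) (eqE (nthE (nthE (up g) c1) (V 0)) c0))))"
lemma evb_initOKE[simp]: "evb (initOKE n g) xs = initOK (ev n xs) (ev g xs)"
  unfolding initOKE_def initOK_def by (simp only: evs2)

definition "stepBody n g g' =
  andE (eqE (nthE (nthE g c0) (V 2)) (trfE n (V 2) (V 0) c0))
  (andE (memCE n (V 1) (trfE n (V 2) (V 0) c2))
  (andE (updCE (nthE g c0) (nthE g' c0) (V 2) (trfE n (V 2) (V 0) c3))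
  (andE (updCE (nthE g c1) (nthE g' c1) (V 1) (nthE (nthE g' c1) (V 1)))
  (orE (andE (eqE (trfE n (V 2) (V 0) c1) c1) (andE (eqE (tlCE n (V 1)) (V 2))
          (appCE (nthE (nthE g c1) (V 1)) (nthE (nthE g' c1) (V 1)) (trfE n (V 2) (V 0) c2))))
       (andE (eqE (trfE n (V 2) (V 0) c1) c0) (andE (eqE (hdCE n (V 1)) (V 2))
          (eqE (nthE (nthE g c1) (V 1)) (S (peE (trfE n (V 2) (V 0) c2) (nthE (nthE g' c1) (V 1)))))))))))"

definition "stepOKE n g g' = andE (eqE (lenE (nthE g c0)) (nMCE n))
  (andE (eqE (lenE (nthE g c1)) (nECE n))
   (bexE (nMCE n) (bexE (nECE (up n)) (bexE (lenE (trCE (up (up n)) (V 1)))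
     (stepBody (up (up (up n))) (up (up (up g))) (up (up (up g'))))))))"

lemma evb_stepOKE[simp]: "evb (stepOKE n g g') xs = stepOK (ev n xs) (ev g xs) (ev g' xs)"
  unfolding stepOKE_def stepBody_def stepOK_def by (simp only: evs2)


definition "finalOKE n g = andE (eqE (nthE (nthE g c0) (hdCE n (betaCE n))) (pCE n))
  (andE (ltE c0 (lenE (nthE (nthE g c1) (betaCE n)))) (eqE (nthE (nthE (nthE g c1) (betaCE n)) c0) (bCE n)))"
lemma evb_finalOKE[simp]: "evb (finalOKE n g) xs = finalOK (ev n xs) (ev g xs)"
  unfolding finalOKE_def finalOK_def by (simp only: evs2)

definition "yesOKE n t = andE (eqE (nthE t c0) c0) (andE (ltE c0 (lenE (nthE t c1)))
  (andE (initOKE n (nthE (nthE t c1) c0))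
  (andE (ballE (lenE (nthE t c1)) (impE (ltE (S (V 0)) (lenE (nthE (up t) c1)))
           (stepOKE (up n) (nthE (nthE (up t) c1) (V 0)) (nthE (nthE (up t) c1) (S (V 0))))))
        (ballE (lenE (nthE t c1)) (impE (eqE (S (V 0)) (lenE (nthE (up t) c1)))
           (finalOKE (up n) (nthE (nthE (up t) c1) (V 0))))))))"
lemma evb_yesOKE[simp]: "evb (yesOKE n t) xs = yesOK (ev n xs) (ev t xs)"
  unfolding yesOKE_def yesOK_def by (simp only: evs2 evb_initOKE evb_stepOKE evb_finalOKE)

definition "KKE t = nthE t c1"
definition "EEE t = nthE t c2"
definition "TTE t x y = nthE (nthE (nthE t c3) x) y"
definition "PHE t a = nthE (nthE t c4) a"
definition "GGE t = nthE t c5"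
definition "GSE t g = nthE (nthE (GGE t) g) c0"
definition "GME t g = nthE (nthE (GGE t) g) c1"
lemma ev_cert[simp]:
  "ev (KKE t) xs = KK (ev t xs)"
  "ev (EEE t) xs = EE (ev t xs)"
  "ev (TTE t x y) xs = TT (ev t xs) (ev x xs) (ev y xs)"
  "ev (PHE t a) xs = PH (ev t xs) (ev a xs)"
  "ev (GGE t) xs = GG (ev t xs)"
  "ev (GSE t g) xs = GS (ev t xs) (ev g xs)"
  "ev (GME t g) xs = GM (ev t xs) (ev g xs)"
  by (simp_all add: KKE_def KK_def EEE_def EE_def TTE_def TT_def PHE_def PH_def GGE_def GG_def GSE_def GS_def GME_def GM_def)

lemmas evs3 = evs2 ev_cert

definition "initME n t g = andE (eqE (lenE (GSE t g)) (nMCE n))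
  (andE (ballE (nMCE n) (eqE (nthE (GSE (up t) (up g)) (V 0)) (initCE (up n) (V 0))))
  (andE (eqE (lenE (GME t g)) (nECE n))
        (ballE (nECE n) (eqE (nthE (GME (up t) (up g)) (V 0)) (EEE (up t))))))"
lemma evb_initME[simp]: "evb (initME n t g) xs = initM (ev n xs) (ev t xs) (ev g xs)"
  unfolding initME_def initM_def by (simp only: evs3)

definition "closBody t n =
  impE (andE (eqE (nthE (GSE t (V 3)) (V 2)) (trfE n (V 2) (V 0) c0)) (memCE n (V 1) (trfE n (V 2) (V 0) c2)))
   (andE (impE (andE (eqE (trfE n (V 2) (V 0) c1) c1) (eqE (tlCE n (V 1)) (V 2)))
           (bexE (lenE (GGE t)) (andE (updCE (GSE (up t) (V 4)) (GSE (up t) (V 0)) (V 3) (trfE (up n) (V 3) (V 1) c3))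
               (updCE (GME (up t) (V 4)) (GME (up t) (V 0)) (V 2)
                  (TTE (up t) (nthE (GME (up t) (V 4)) (V 2)) (PHE (up t) (trfE (up n) (V 3) (V 1) c2)))))))
         (impE (andE (eqE (trfE n (V 2) (V 0) c1) c0) (eqE (hdCE n (V 1)) (V 2)))
           (ballE (KKE t) (impE (eqE (TTE (up t) (PHE (up t) (trfE (up n) (V 3) (V 1) c2)) (V 0)) (nthE (GME (up t) (V 4)) (V 2)))
               (bexE (lenE (GGE (up t))) (andE (updCE (GSE (up (up t)) (V 5)) (GSE (up (up t)) (V 0)) (V 4) (trfE (up (up n)) (V 4) (V 2) c3))
                   (updCE (GME (up (up t)) (V 5)) (GME (up (up t)) (V 0)) (V 3) (V 1))))))))"

definition "closME n t = ballE (lenE (GGE t)) (ballE (nMCE (up n)) (ballE (nECE (up (up n)))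
   (ballE (lenE (trCE (up (up (up n))) (V 1))) (closBody (up (up (up (up t)))) (up (up (up (up n))))))))"
lemma evb_closME[simp]: "evb (closME n t) xs = closM (ev n xs) (ev t xs)"
  unfolding closME_def closBody_def closM_def by (simp only: evs3)

definition "safeME n t = ballE (lenE (GGE t)) (impE (eqE (nthE (GSE (up t) (V 0)) (hdCE (up n) (betaCE (up n)))) (pCE (up n)))
   (ballE (KKE (up t)) (notE (eqE (TTE (up (up t)) (PHE (up (up t)) (bCE (up (up n)))) (V 0)) (nthE (GME (up (up t)) (V 1)) (betaCE (up (up n))))))))"
lemma evb_safeME[simp]: "evb (safeME n t) xs = safeM (ev n xs) (ev t xs)"
  unfolding safeME_def safeM_def by (simp only: evs3)

definition "monME t = andE (ltE (EEE t) (KKE t))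
  (andE (ballE (KKE t) (ballE (KKE (up t)) (ltE (TTE (up (up t)) (V 1) (V 0)) (KKE (up (up t))))))
  (andE (ballE (KKE t) (andE (eqE (TTE (up t) (EEE (up t)) (V 0)) (V 0)) (eqE (TTE (up t) (V 0) (EEE (up t))) (V 0))))
   (ballE (KKE t) (ballE (KKE (up t)) (ballE (KKE (up (up t)))
      (eqE (TTE (up (up (up t))) (TTE (up (up (up t))) (V 2) (V 1)) (V 0))
           (TTE (up (up (up t))) (V 2) (TTE (up (up (up t))) (V 1) (V 0)))))))))"
lemma evb_monME[simp]: "evb (monME t) xs = monM (ev t xs)"
  unfolding monME_def monM_def by (simp only: evs3)

definition "letME n t = ballE (nECE n) (ballE (lenE (msCE (up n) (V 0)))
   (ltE (PHE (up (up t)) (nthE (msCE (up (up n)) (V 1)) (V 0))) (KKE (up (up t)))))"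
lemma evb_letME[simp]: "evb (letME n t) xs = letM (ev n xs) (ev t xs)"
  unfolding letME_def letM_def by (simp only: evs3)

definition "noOKE n t = andE (eqE (nthE t c0) c1) (andE (monME t) (andE (letME n t)
   (andE (bexE (lenE (GGE t)) (initME (up n) (up t) (V 0))) (andE (closME n t) (safeME n t)))))"
lemma evb_noOKE[simp]: "evb (noOKE n t) xs = noOK (ev n xs) (ev t xs)"
  unfolding noOKE_def noOK_def by (simp only: evs3 evb_monME evb_letME evb_initME evb_closME evb_safeME)


declare list_encode.simps[simp del]

lemma inj_enc_edge: "inj enc_edge"
  by (rule injI) (auto simp: enc_edge_eq list_encode_eq prod_eq_iff)
lemma inj_enc_trans: "inj enc_trans"
  by (rule injI) (auto simp: enc_trans_eq list_encode_eq prod_eq_iff split: if_splits)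
lemma inj_enc_machine: "inj enc_machine"
proof (rule injI)
  fix m m' assume "enc_machine m = enc_machine m'"
  then have "fst m = fst m'" "fst (snd m) = fst (snd m')" "map enc_trans (snd (snd m)) = map enc_trans (snd (snd m'))"
    by (auto simp: enc_machine_eq list_encode_eq)
  then show "m = m'" using inj_map_eq_map[OF inj_enc_trans] by (auto simp: prod_eq_iff)
qed

lemma enc_instance_inj:
  assumes "enc_instance P \<beta> b p = enc_instance P' \<beta>' b' p'"
  shows "P = P' \<and> \<beta> = \<beta>' \<and> b = b' \<and> p = p'"
proof -
  have 1: "enc_protocol P = enc_protocol P'" "\<beta> = \<beta>'" "b = b'" "p = p'"
    using assms by (auto simp: enc_instance_def list_encode_eq)
  then have "map enc_edge (edges P) = map enc_edge (edges P')" "map enc_machine (machines P) = map enc_machine (machines P')"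
    by (auto simp: enc_protocol_def list_encode_eq)
  then have "edges P = edges P'" "machines P = machines P'"
    using inj_map_eq_map[OF inj_enc_edge] inj_map_eq_map[OF inj_enc_machine] by auto
  then have "P = P'" by (simp add: edges_def machines_def prod_eq_iff)
  then show ?thesis using 1 by simp
qed

definition "chkE = orE (yesOKE (V 1) (V 0)) (noOKE (V 1) (V 0))"
definition "gE = notE chkE"
definition "ansE = iteE (yesOKE (V 1) (V 0)) c1 c0"

lemma ev_gE: "ev gE [t, n] = (if yesOK n t \<or> noOK n t then 0 else 1)"
proof -
  have "evb chkE [t, n] = (yesOK n t \<or> noOK n t)" unfolding chkE_def by (simp only: evs3 evb_yesOKE evb_noOKE)
  then show ?thesis unfolding gE_def evb_def by auto
qed

lemma ev_ansE: "ev ansE [t, n] = (if yesOK n t then 1 else 0)"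
proof -
  have "evb (yesOKE (V 1) (V 0)) [t, n] = yesOK n t" by simp
  then show ?thesis unfolding ansE_def by (simp add: ev_iteE)
qed

theorem corollary9p10:
  shows "decidable_on
           (\<lambda>n. \<exists>P \<beta> b p. n = enc_instance P \<beta> b p \<and> valid_instance P \<beta> b p \<and>
                          recognizable_channel_property P)
           (\<lambda>n. \<exists>P \<beta> b p. n = enc_instance P \<beta> b p \<and> can_arrive P \<beta> b p)"
proof -
  obtain fg where fg: "\<forall>xs. length xs = 2 \<longrightarrow> eval_recf fg xs (ev gE xs)" using rc_ev[of 2 gE] unfolding rc_def by blast
  obtain fa where fa: "\<forall>xs. length xs = 2 \<longrightarrow> eval_recf fa xs (ev ansE xs)" using rc_ev[of 2 ansE] unfolding rc_def by blast
  show ?thesis unfolding decidable_on_def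
  proof (intro exI[of _ "RComp fa [RMin fg, RProj 0]"] allI impI)
    fix n assume "\<exists>P \<beta> b p. n = enc_instance P \<beta> b p \<and> valid_instance P \<beta> b p \<and> recognizable_channel_property P"
    then obtain P \<beta> b p where n: "n = enc_instance P \<beta> b p" and v: "valid_instance P \<beta> b p"
      and rcp: "recognizable_channel_property P" by blast
    interpret inst P \<beta> b p n by standard (rule n)
    have wf: "wf_protocol P" and bt: "\<beta> < length (edges P)" and bm: "b \<in> msgs P \<beta>"
      using v by (auto simp: valid_instance_def)
    have ex: "\<exists>t. yesOK n t \<or> noOK n t"
    proof (cases "can_arrive P \<beta> b p")
      case True then show ?thesis using yes_complete[OF bt wf] by blast
    next
      case False
      interpret nocert2 P \<beta> b p n by standard (use wf bt rcp False bm in auto)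
      show ?thesis using noOK by blast
    qed
    define t0 where "t0 = (LEAST t. yesOK n t \<or> noOK n t)"
    have t0: "yesOK n t0 \<or> noOK n t0" unfolding t0_def using ex by (rule LeastI_ex)
    have below: "\<And>m. m < t0 \<Longrightarrow> \<not> (yesOK n m \<or> noOK n m)" unfolding t0_def by (rule not_less_Least)
    have emin: "eval_recf (RMin fg) [n] t0"
    proof (rule eval_recf.mini)
      show "eval_recf fg [t0, n] 0" using fg[rule_format, of "[t0, n]"] t0 by (simp add: ev_gE)
      show "\<forall>m<t0. \<exists>k. eval_recf fg [m, n] (Suc k)"
      proof (intro allI impI)
        fix m assume "m < t0"
        then have "ev gE [m, n] = Suc 0" using below[of m] by (simp add: ev_gE)
        then show "\<exists>k. eval_recf fg [m, n] (Suc k)" using fg[rule_format, of "[m, n]"] by auto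
      qed
    qed
    have eproj: "eval_recf (RProj 0) [n] n" using eval_recf.proj[of 0 "[n]"] by simp
    have ea: "eval_recf (RComp fa [RMin fg, RProj 0]) [n] (ev ansE [t0, n])"
      apply (rule eval_recf.comp[where zs="[t0, n]"])
      using emin eproj fa by (auto simp: nth_Cons')
    have Q: "(\<exists>P \<beta> b p. n = enc_instance P \<beta> b p \<and> can_arrive P \<beta> b p) \<longleftrightarrow> can_arrive P \<beta> b p"
      using n enc_instance_inj by metis
    have "ev ansE [t0, n] = (if can_arrive P \<beta> b p then 1 else 0)"
    proof (cases "yesOK n t0")
      case True then show ?thesis using yes_sound[OF wf bt] by (simp add: ev_ansE)
    next
      case False then have "noOK n t0" using t0 by simp
      then show ?thesis using no_sound[OF wf bt] False by (simp add: ev_ansE)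
    qed
    then show "eval_recf (RComp fa [RMin fg, RProj 0]) [n]
          (if \<exists>P \<beta> b p. n = enc_instance P \<beta> b p \<and> can_arrive P \<beta> b p then 1 else 0)"
      using ea Q by simp
  qed
qed


end
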